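(* Let $(E,\mu)$ and $(F,\nu)$ be fuzzy Riesz spaces with $F$ fuzzy Dedekind complete, and let $T:E\rightarrow F$ be a fuzzy order bounded operator. Then: (1) $T$ is fuzzy order continuous if and only if the fuzzy null ideal $N_S$ is a fuzzy band for every operator $S$ in the fuzzy ideal $A_T$ generated by $T$ in $FL_b(E,F)$; (2) $T$ is fuzzy $\sigma$-order continuous if and only if the fuzzy null ideal $N_S$ is a fuzzy $\sigma$-ideal for every $S\in A_T$.
   Context: A fuzzy order on a real vector space $E$ is a map $\mu:E\times E\to[0,1]$ with $\mu(x,x)=1$; $\mu(x,y)+\mu(y,x)>1$ implies $x=y$; and $\mu(x,z)\ge\sup_{y}\min(\mu(x,y),\mu(y,z))$. Write $x\le y$ for $\mu(x,y)>\frac12$; upper bounds, suprema and infima are taken with respect to this relation. $(E,\mu)$ is a fuzzy ordered linear space if $\mu(x_1,x_2)>\frac12$ implies $\mu(x_1,x_2)\le\mu(x_1+x,x_2+x)$ for all $x$ and $\mu(x_1,x_2)\le\mu(\alpha x_1,\alpha x_2)$ for all $\alpha>0$; it is a fuzzy Riesz space if $x\vee y=\sup\{x,y\}$, $x\wedge y=\inf\{x,y\}$ exist for all $x,y$; it is fuzzy Dedekind complete if every nonempty subset bounded above has a supremum. $|x|=x\vee(-x)$. A subset is fuzzy order bounded if it has an upper and a lower bound. A linear operator $T:E\to F$ is fuzzy positive if $0\le x$ implies $0\le Tx$, and fuzzy order bounded if it maps fuzzy order bounded sets to fuzzy order bounded sets; $FL_b(E,F)$ is the space of fuzzy order bounded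 operators, ordered by $S\le T$ iff $T-S$ is fuzzy positive; for $F$ fuzzy Dedekind complete it is a fuzzy Riesz space, $|S|$ denotes the modulus of $S$ in it, and $A_T$ is the smallest fuzzy ideal of $FL_b(E,F)$ containing $T$. The fuzzy null ideal of $S$ is $N_S=\{x\in E: |S|(|x|)=0\}$. A fuzzy ideal is a vector subspace $A$ such that $\mu(|x|,|y|)>\frac12$ and $y\in A$ imply $x\in A$; a fuzzy band is a fuzzy ideal containing the supremum (in $E$) of each of its subsets having a supremum; a fuzzy $\sigma$-ideal is a fuzzy ideal $A$ such that $0\le x_n\in A$, $x_n\uparrow x$ imply $x\in A$. $y_\alpha\downarrow 0$ means the net is decreasing with infimum $0$. A net $x_\alpha$ fuzzy order converges to $x$ if there is a net $y_\alpha$ (same index set) with $y_\alpha\downarrow0$ and $\mu(|x_\alpha-x|,y_\alpha)>\frac12$ for all $\alpha$. $T$ is fuzzy order continuous if $x_\alpha\to0$ in fuzzy order (nets) implies $Tx_\alpha\to0$ in fuzzy order, and fuzzy $\sigma$-order continuous if the same holds for sequences. *)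

theory Defs
  imports Complex_Main
begin

definition fuzzy_order :: "('a \<Rightarrow> 'a \<Rightarrow> real) \<Rightarrow> bool" where
  "fuzzy_order \<mu> \<longleftrightarrow>
     (\<forall>x y. 0 \<le> \<mu> x y \<and> \<mu> x y \<le> 1) \<and>
     (\<forall>x. \<mu> x x = 1) \<and>
     (\<forall>x y. \<mu> x y + \<mu> y x > 1 \<longrightarrow> x = y) \<and>
     (\<forall>x z. \<mu> x z \<ge> (SUP y. min (\<mu> x y) (\<mu> y z)))"

definition fle :: "('a \<Rightarrow> 'a \<Rightarrow> real) \<Rightarrow> 'a \<Rightarrow> 'a \<Rightarrow> bool" where
  "fle \<mu> x y \<longleftrightarrow> \<mu> x y > 1/2"

definition is_ub_on :: "'a set \<Rightarrow> ('a \<Rightarrow> 'a \<Rightarrow> bool) \<Rightarrow> 'a set \<Rightarrow> 'a \<Rightarrow> bool" where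
  "is_ub_on C le A u \<longleftrightarrow> u \<in> C \<and> (\<forall>a\<in>A. le a u)"

definition is_lb_on :: "'a set \<Rightarrow> ('a \<Rightarrow> 'a \<Rightarrow> bool) \<Rightarrow> 'a set \<Rightarrow> 'a \<Rightarrow> bool" where
  "is_lb_on C le A l \<longleftrightarrow> l \<in> C \<and> (\<forall>a\<in>A. le l a)"

definition is_sup_on :: "'a set \<Rightarrow> ('a \<Rightarrow> 'a \<Rightarrow> bool) \<Rightarrow> 'a set \<Rightarrow> 'a \<Rightarrow> bool" where
  "is_sup_on C le A s \<longleftrightarrow> is_ub_on C le A s \<and> (\<forall>u. is_ub_on C le A u \<longrightarrow> le s u)"

definition is_inf_on :: "'a set \<Rightarrow> ('a \<Rightarrow> 'a \<Rightarrow> bool) \<Rightarrow> 'a set \<Rightarrow> 'a \<Rightarrow> bool" where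
  "is_inf_on C le A i \<longleftrightarrow> is_lb_on C le A i \<and> (\<forall>l. is_lb_on C le A l \<longrightarrow> le l i)"

definition sup_on :: "'a set \<Rightarrow> ('a \<Rightarrow> 'a \<Rightarrow> bool) \<Rightarrow> 'a set \<Rightarrow> 'a" where
  "sup_on C le A = (THE s. is_sup_on C le A s)"

abbreviation fub :: "('a \<Rightarrow> 'a \<Rightarrow> real) \<Rightarrow> 'a set \<Rightarrow> 'a \<Rightarrow> bool" where
  "fub \<mu> \<equiv> is_ub_on UNIV (fle \<mu>)"
abbreviation flb :: "('a \<Rightarrow> 'a \<Rightarrow> real) \<Rightarrow> 'a set \<Rightarrow> 'a \<Rightarrow> bool" where
  "flb \<mu> \<equiv> is_lb_on UNIV (fle \<mu>)"
abbreviation is_fsup :: "('a \<Rightarrow> 'a \<Rightarrow> real) \<Rightarrow> 'a set \<Rightarrow> 'a \<Rightarrow> bool" where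
  "is_fsup \<mu> \<equiv> is_sup_on UNIV (fle \<mu>)"
abbreviation is_finf :: "('a \<Rightarrow> 'a \<Rightarrow> real) \<Rightarrow> 'a set \<Rightarrow> 'a \<Rightarrow> bool" where
  "is_finf \<mu> \<equiv> is_inf_on UNIV (fle \<mu>)"

definition fuzzy_ordered_linear_space :: "('a::real_vector \<Rightarrow> 'a \<Rightarrow> real) \<Rightarrow> bool" where
  "fuzzy_ordered_linear_space \<mu> \<longleftrightarrow> fuzzy_order \<mu> \<and>
     (\<forall>x1 x2 x. \<mu> x1 x2 > 1/2 \<longrightarrow> \<mu> x1 x2 \<le> \<mu> (x1 + x) (x2 + x)) \<and>
     (\<forall>x1 x2 (\<alpha>::real). \<mu> x1 x2 > 1/2 \<and> \<alpha> > 0 \<longrightarrow> \<mu> x1 x2 \<le> \<mu> (\<alpha> *\<^sub>R x1) (\<alpha> *\<^sub>R x2))"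

definition fuzzy_riesz :: "('a::real_vector \<Rightarrow> 'a \<Rightarrow> real) \<Rightarrow> bool" where
  "fuzzy_riesz \<mu> \<longleftrightarrow> fuzzy_ordered_linear_space \<mu> \<and>
     (\<forall>x y. (\<exists>s. is_fsup \<mu> {x, y} s) \<and> (\<exists>i. is_finf \<mu> {x, y} i))"

definition fuzzy_dedekind_complete :: "('a \<Rightarrow> 'a \<Rightarrow> real) \<Rightarrow> bool" where
  "fuzzy_dedekind_complete \<mu> \<longleftrightarrow>
     (\<forall>A. A \<noteq> {} \<and> (\<exists>u. fub \<mu> A u) \<longrightarrow> (\<exists>s. is_fsup \<mu> A s))"

definition fabs :: "('a::real_vector \<Rightarrow> 'a \<Rightarrow> real) \<Rightarrow> 'a \<Rightarrow> 'a" where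
  "fabs \<mu> x = sup_on UNIV (fle \<mu>) {x, - x}"

definition forder_bounded_set :: "('a \<Rightarrow> 'a \<Rightarrow> real) \<Rightarrow> 'a set \<Rightarrow> bool" where
  "forder_bounded_set \<mu> A \<longleftrightarrow> (\<exists>u. fub \<mu> A u) \<and> (\<exists>l. flb \<mu> A l)"

definition fuzzy_ideal :: "('a::real_vector \<Rightarrow> 'a \<Rightarrow> real) \<Rightarrow> 'a set \<Rightarrow> bool" where
  "fuzzy_ideal \<mu> A \<longleftrightarrow> subspace A \<and>
     (\<forall>x y. fle \<mu> (fabs \<mu> x) (fabs \<mu> y) \<and> y \<in> A \<longrightarrow> x \<in> A)"

definition fuzzy_band :: "('a::real_vector \<Rightarrow> 'a \<Rightarrow> real) \<Rightarrow> 'a set \<Rightarrow> bool" where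
  "fuzzy_band \<mu> A \<longleftrightarrow> fuzzy_ideal \<mu> A \<and>
     (\<forall>B s. B \<subseteq> A \<and> is_fsup \<mu> B s \<longrightarrow> s \<in> A)"

definition fincreases_to :: "('a \<Rightarrow> 'a \<Rightarrow> real) \<Rightarrow> (nat \<Rightarrow> 'a) \<Rightarrow> 'a \<Rightarrow> bool" where
  "fincreases_to \<mu> x s \<longleftrightarrow> (\<forall>m n. m \<le> n \<longrightarrow> fle \<mu> (x m) (x n)) \<and> is_fsup \<mu> (range x) s"

definition fuzzy_sigma_ideal :: "('a::real_vector \<Rightarrow> 'a \<Rightarrow> real) \<Rightarrow> 'a set \<Rightarrow> bool" where
  "fuzzy_sigma_ideal \<mu> A \<longleftrightarrow> fuzzy_ideal \<mu> A \<and>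
     (\<forall>x s. (\<forall>n. fle \<mu> 0 (x n) \<and> x n \<in> A) \<and> fincreases_to \<mu> x s \<longrightarrow> s \<in> A)"

definition directed_set :: "'i set \<Rightarrow> ('i \<Rightarrow> 'i \<Rightarrow> bool) \<Rightarrow> bool" where
  "directed_set I r \<longleftrightarrow> I \<noteq> {} \<and> (\<forall>a\<in>I. r a a) \<and>
     (\<forall>a\<in>I. \<forall>b\<in>I. \<forall>c\<in>I. r a b \<and> r b c \<longrightarrow> r a c) \<and>
     (\<forall>a\<in>I. \<forall>b\<in>I. \<exists>c\<in>I. r a c \<and> r b c)"

definition fdecreases_to_zero :: "('a::real_vector \<Rightarrow> 'a \<Rightarrow> real) \<Rightarrow> 'i set \<Rightarrow> ('i \<Rightarrow> 'i \<Rightarrow> bool) \<Rightarrow> ('i \<Rightarrow> 'a) \<Rightarrow> bool" where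
  "fdecreases_to_zero \<mu> I r y \<longleftrightarrow>
     (\<forall>a\<in>I. \<forall>b\<in>I. r a b \<longrightarrow> fle \<mu> (y b) (y a)) \<and> is_finf \<mu> (y ` I) 0"

definition forder_converges :: "('a::real_vector \<Rightarrow> 'a \<Rightarrow> real) \<Rightarrow> 'i set \<Rightarrow> ('i \<Rightarrow> 'i \<Rightarrow> bool) \<Rightarrow> ('i \<Rightarrow> 'a) \<Rightarrow> 'a \<Rightarrow> bool" where
  "forder_converges \<mu> I r x l \<longleftrightarrow>
     (\<exists>y. fdecreases_to_zero \<mu> I r y \<and> (\<forall>a\<in>I. fle \<mu> (fabs \<mu> (x a - l)) (y a)))"

definition fuzzy_positive :: "('a::real_vector \<Rightarrow> 'a \<Rightarrow> real) \<Rightarrow> ('b::real_vector \<Rightarrow> 'b \<Rightarrow> real) \<Rightarrow> ('a \<Rightarrow> 'b) \<Rightarrow> bool" where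
  "fuzzy_positive \<mu> \<nu> T \<longleftrightarrow> (\<forall>x. fle \<mu> 0 x \<longrightarrow> fle \<nu> 0 (T x))"

definition FLb :: "('a::real_vector \<Rightarrow> 'a \<Rightarrow> real) \<Rightarrow> ('b::real_vector \<Rightarrow> 'b \<Rightarrow> real) \<Rightarrow> ('a \<Rightarrow> 'b) set" where
  "FLb \<mu> \<nu> = {T. linear T \<and> (\<forall>A. forder_bounded_set \<mu> A \<longrightarrow> forder_bounded_set \<nu> (T ` A))}"

definition op_le :: "('a::real_vector \<Rightarrow> 'a \<Rightarrow> real) \<Rightarrow> ('b::real_vector \<Rightarrow> 'b \<Rightarrow> real) \<Rightarrow> ('a \<Rightarrow> 'b) \<Rightarrow> ('a \<Rightarrow> 'b) \<Rightarrow> bool" where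
  "op_le \<mu> \<nu> S T \<longleftrightarrow> fuzzy_positive \<mu> \<nu> (\<lambda>x. T x - S x)"

definition op_abs :: "('a::real_vector \<Rightarrow> 'a \<Rightarrow> real) \<Rightarrow> ('b::real_vector \<Rightarrow> 'b \<Rightarrow> real) \<Rightarrow> ('a \<Rightarrow> 'b) \<Rightarrow> ('a \<Rightarrow> 'b)" where
  "op_abs \<mu> \<nu> S = sup_on (FLb \<mu> \<nu>) (op_le \<mu> \<nu>) {S, \<lambda>x. - S x}"

definition op_subspace :: "('a \<Rightarrow> 'b::real_vector) set \<Rightarrow> bool" where
  "op_subspace A \<longleftrightarrow> (\<lambda>x. 0) \<in> A \<and>
     (\<forall>S\<in>A. \<forall>R\<in>A. (\<lambda>x. S x + R x) \<in> A) \<and>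
     (\<forall>(c::real). \<forall>S\<in>A. (\<lambda>x. c *\<^sub>R S x) \<in> A)"

definition op_ideal :: "('a::real_vector \<Rightarrow> 'a \<Rightarrow> real) \<Rightarrow> ('b::real_vector \<Rightarrow> 'b \<Rightarrow> real) \<Rightarrow> ('a \<Rightarrow> 'b) set \<Rightarrow> bool" where
  "op_ideal \<mu> \<nu> A \<longleftrightarrow> A \<subseteq> FLb \<mu> \<nu> \<and> op_subspace A \<and>
     (\<forall>S R. S \<in> FLb \<mu> \<nu> \<and> R \<in> A \<and> op_le \<mu> \<nu> (op_abs \<mu> \<nu> S) (op_abs \<mu> \<nu> R) \<longrightarrow> S \<in> A)"

definition gen_ideal :: "('a::real_vector \<Rightarrow> 'a \<Rightarrow> real) \<Rightarrow> ('b::real_vector \<Rightarrow> 'b \<Rightarrow> real) \<Rightarrow> ('a \<Rightarrow> 'b) \<Rightarrow> ('a \<Rightarrow> 'b) set" where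
  "gen_ideal \<mu> \<nu> T = \<Inter>{A. op_ideal \<mu> \<nu> A \<and> T \<in> A}"

definition null_ideal :: "('a::real_vector \<Rightarrow> 'a \<Rightarrow> real) \<Rightarrow> ('b::real_vector \<Rightarrow> 'b \<Rightarrow> real) \<Rightarrow> ('a \<Rightarrow> 'b) \<Rightarrow> 'a set" where
  "null_ideal \<mu> \<nu> S = {x. op_abs \<mu> \<nu> S (fabs \<mu> x) = 0}"

text \<open>Fuzzy order continuity, for nets indexed by directed subsets of the index type \<open>'i\<close>.\<close>
definition fuzzy_order_continuous :: "'i itself \<Rightarrow> ('a::real_vector \<Rightarrow> 'a \<Rightarrow> real) \<Rightarrow> ('b::real_vector \<Rightarrow> 'b \<Rightarrow> real) \<Rightarrow> ('a \<Rightarrow> 'b) \<Rightarrow> bool" where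
  "fuzzy_order_continuous _ \<mu> \<nu> T \<longleftrightarrow>
     (\<forall>(I::'i set) r x. directed_set I r \<and> forder_converges \<mu> I r x 0 \<longrightarrow>
        forder_converges \<nu> I r (\<lambda>a. T (x a)) 0)"

definition fuzzy_sigma_order_continuous :: "('a::real_vector \<Rightarrow> 'a \<Rightarrow> real) \<Rightarrow> ('b::real_vector \<Rightarrow> 'b \<Rightarrow> real) \<Rightarrow> ('a \<Rightarrow> 'b) \<Rightarrow> bool" where
  "fuzzy_sigma_order_continuous \<mu> \<nu> T \<longleftrightarrow>
     (\<forall>x::nat \<Rightarrow> 'a. forder_converges \<mu> UNIV (\<le>) x 0 \<longrightarrow>
        forder_converges \<nu> UNIV (\<le>) (\<lambda>n. T (x n)) 0)"

end

theory Submission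
  imports Defs
begin

lemma sup_on_unique:
  assumes "is_sup_on C le A s" and "\<And>a b. a \<in> C \<Longrightarrow> b \<in> C \<Longrightarrow> le a b \<Longrightarrow> le b a \<Longrightarrow> a = b"
  shows "sup_on C le A = s"
  unfolding sup_on_def
proof (rule the_equality)
  show "is_sup_on C le A s" by fact
  fix t assume "is_sup_on C le A t"
  with assms show "t = s" unfolding is_sup_on_def is_ub_on_def by blast
qed

locale rsp =
  fixes \<mu> :: "'a::real_vector \<Rightarrow> 'a \<Rightarrow> real"
  assumes R: "fuzzy_riesz \<mu>"
begin

abbreviation lq where "lq \<equiv> fle \<mu>"

lemma FO: "fuzzy_order \<mu>" using R unfolding fuzzy_riesz_def fuzzy_ordered_linear_space_def by auto

lemma lq_refl[simp,intro]: "lq x x"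
  using FO unfolding fuzzy_order_def fle_def by auto

lemma lq_antisym: "lq x y \<Longrightarrow> lq y x \<Longrightarrow> x = y"
  using FO unfolding fuzzy_order_def fle_def by auto

lemma lq_trans: assumes "lq x y" "lq y z" shows "lq x z"
proof -
  have b: "bdd_above (range (\<lambda>w. min (\<mu> x w) (\<mu> w z)))"
    using FO unfolding fuzzy_order_def by (intro bdd_aboveI[of _ 1]) (auto simp: min_le_iff_disj)
  have "min (\<mu> x y) (\<mu> y z) \<le> (SUP w. min (\<mu> x w) (\<mu> w z))"
    by (rule cSUP_upper[OF _ b]) simp
  also have "\<dots> \<le> \<mu> x z" using FO unfolding fuzzy_order_def by auto
  finally show ?thesis using assms unfolding fle_def by auto
qed

lemma lq_add: "lq x y \<Longrightarrow> lq (x + z) (y + z)"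
  using R unfolding fuzzy_riesz_def fuzzy_ordered_linear_space_def fle_def
  by (smt (verit))

lemma lq_add_iff: "lq (x + z) (y + z) \<longleftrightarrow> lq x y"
  using lq_add[of x y z] lq_add[of "x+z" "y+z" "-z"] by auto

lemma lq_scale: "0 < c \<Longrightarrow> lq x y \<Longrightarrow> lq (c *\<^sub>R x) (c *\<^sub>R y)"
  using R unfolding fuzzy_riesz_def fuzzy_ordered_linear_space_def fle_def
  by (smt (verit))

lemma lq_scale_iff: "0 < c \<Longrightarrow> lq (c *\<^sub>R x) (c *\<^sub>R y) \<longleftrightarrow> lq x y"
  using lq_scale[of c x y] lq_scale[of "inverse c" "c *\<^sub>R x" "c *\<^sub>R y"] by auto

lemma lq_scale0: "0 \<le> c \<Longrightarrow> lq x y \<Longrightarrow> lq (c *\<^sub>R x) (c *\<^sub>R y)"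
  using lq_scale[of c x y] by (cases "c = 0") auto

lemma lq_diff: "lq x y \<longleftrightarrow> lq 0 (y - x)"
  using lq_add_iff[of x "-x" y] by (simp add: algebra_simps)

lemma lq_diff2: "lq x y \<longleftrightarrow> lq (x - y) 0"
  using lq_add_iff[of x "-y" y] by (simp add: algebra_simps)

lemma lq_neg: "lq x y \<Longrightarrow> lq (-y) (-x)"
  using lq_add_iff[of x "-x-y" y] by (simp add: algebra_simps)

lemma lq_neg_iff: "lq (-y) (-x) \<longleftrightarrow> lq x y"
  using lq_neg[of x y] lq_neg[of "-y" "-x"] by auto

lemma lq_add_mono: "lq a b \<Longrightarrow> lq c d \<Longrightarrow> lq (a + c) (b + d)"
  using lq_add[of a b c] lq_add[of c d b] lq_trans by (auto simp: add.commute)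

lemma lq_scale_neg: "c \<le> 0 \<Longrightarrow> lq x y \<Longrightarrow> lq (c *\<^sub>R y) (c *\<^sub>R x)"
  using lq_scale0[of "-c" x y] lq_neg by fastforce

lemma lq_sum_nonneg: "lq 0 a \<Longrightarrow> lq 0 b \<Longrightarrow> lq 0 (a + b)"
  using lq_add_mono[of 0 a 0 b] by simp

lemma lq_le_add: "lq 0 b \<Longrightarrow> lq a (a + b)"
  using lq_add_mono[of a a 0 b] by simp

lemma lq_sub_le: "lq 0 b \<Longrightarrow> lq (a - b) a"
  using lq_le_add[of b "a - b"] by simp

definition jn where "jn x y = sup_on UNIV lq {x, y}"
definition mt where "mt x y = - jn (-x) (-y)"

lemma jn_is: "is_sup_on UNIV lq {x,y} (jn x y)"
proof -
  obtain s where s: "is_sup_on UNIV lq {x,y} s" using R unfolding fuzzy_riesz_def by blast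
  have "jn x y = s" unfolding jn_def by (rule sup_on_unique[OF s]) (auto intro: lq_antisym)
  with s show ?thesis by simp
qed

lemma jn_ub1[simp,intro]: "lq x (jn x y)" using jn_is unfolding is_sup_on_def is_ub_on_def by auto
lemma jn_ub2[simp,intro]: "lq y (jn x y)" using jn_is unfolding is_sup_on_def is_ub_on_def by auto
lemma jn_least: "lq x z \<Longrightarrow> lq y z \<Longrightarrow> lq (jn x y) z"
  using jn_is[of x y] unfolding is_sup_on_def is_ub_on_def by auto

lemma mt_lb1[simp,intro]: "lq (mt x y) x" unfolding mt_def using jn_ub1[of "-x" "-y"] lq_neg by fastforce
lemma mt_lb2[simp,intro]: "lq (mt x y) y" unfolding mt_def using jn_ub2[of "-y" "-x"] lq_neg by fastforce
lemma mt_greatest: "lq z x \<Longrightarrow> lq z y \<Longrightarrow> lq z (mt x y)"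
  unfolding mt_def using jn_least[of "-x" "-z" "-y"] lq_neg lq_neg_iff by (metis minus_minus)




lemma jn_comm: "jn x y = jn y x"
  by (intro lq_antisym jn_least) auto
lemma mt_comm: "mt x y = mt y x"
  by (intro lq_antisym mt_greatest) auto
lemma jn_mono: "lq a b \<Longrightarrow> lq c d \<Longrightarrow> lq (jn a c) (jn b d)"
  by (intro jn_least) (meson jn_ub1 jn_ub2 lq_trans)+
lemma mt_mono: "lq a b \<Longrightarrow> lq c d \<Longrightarrow> lq (mt a c) (mt b d)"
  by (intro mt_greatest) (meson mt_lb1 mt_lb2 lq_trans)+
lemma jn_eq_right: "lq x y \<Longrightarrow> jn x y = y"
  by (intro lq_antisym jn_least) auto
lemma jn_eq_left: "lq y x \<Longrightarrow> jn x y = x"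
  by (intro lq_antisym jn_least) auto
lemma mt_eq_left: "lq x y \<Longrightarrow> mt x y = x"
  by (intro lq_antisym mt_greatest) auto
lemma mt_eq_right: "lq y x \<Longrightarrow> mt x y = y"
  by (intro lq_antisym mt_greatest) auto

lemma jn_add: "jn (x + z) (y + z) = jn x y + z"
proof (rule lq_antisym)
  show "lq (jn (x + z) (y + z)) (jn x y + z)"
    by (intro jn_least) (auto simp: lq_add_iff)
  have "lq (jn x y) (jn (x + z) (y + z) - z)"
  proof (intro jn_least)
    show "lq x (jn (x + z) (y + z) - z)"
      using jn_ub1[of "x+z" "y+z"] lq_add_iff[of "x+z" "-z"] by simp
    show "lq y (jn (x + z) (y + z) - z)"
      using jn_ub2[of "y+z" "x+z"] lq_add_iff[of "y+z" "-z"] by simp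
  qed
  then show "lq (jn x y + z) (jn (x + z) (y + z))"
    using lq_add_iff[of "jn x y" z "jn (x + z) (y + z) - z"] by simp
qed

lemma mt_add: "mt (x + z) (y + z) = mt x y + z"
  unfolding mt_def using jn_add[of "-x" "-z" "-y"] by (simp add: algebra_simps)

lemma jn_scale: assumes "0 < c" shows "jn (c *\<^sub>R x) (c *\<^sub>R y) = c *\<^sub>R jn x y"
proof (rule lq_antisym)
  show "lq (jn (c *\<^sub>R x) (c *\<^sub>R y)) (c *\<^sub>R jn x y)"
    by (intro jn_least) (auto simp: lq_scale_iff assms)
  have "lq (jn x y) (inverse c *\<^sub>R jn (c *\<^sub>R x) (c *\<^sub>R y))"
  proof (intro jn_least)
    show "lq x (inverse c *\<^sub>R jn (c *\<^sub>R x) (c *\<^sub>R y))"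
      using lq_scale[of "inverse c" "c *\<^sub>R x" "jn (c *\<^sub>R x) (c *\<^sub>R y)"] assms by simp
    show "lq y (inverse c *\<^sub>R jn (c *\<^sub>R x) (c *\<^sub>R y))"
      using lq_scale[of "inverse c" "c *\<^sub>R y" "jn (c *\<^sub>R x) (c *\<^sub>R y)"] assms by simp
  qed
  then show "lq (c *\<^sub>R jn x y) (jn (c *\<^sub>R x) (c *\<^sub>R y))"
    using lq_scale[of c "jn x y"] assms by fastforce
qed

lemma mt_scale: "0 < c \<Longrightarrow> mt (c *\<^sub>R x) (c *\<^sub>R y) = c *\<^sub>R mt x y"
  unfolding mt_def using jn_scale[of c "-x" "-y"] by simp

lemma jn_mt: "jn x y + mt x y = x + y"
proof -
  have "jn (-x + (x + y)) (-y + (x + y)) = jn (-x) (-y) + (x + y)" by (rule jn_add)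
  then have "jn y x = jn (-x) (-y) + (x + y)" by (simp add: algebra_simps)
  then show ?thesis unfolding mt_def by (simp add: jn_comm algebra_simps)
qed

lemma mt_eq: "mt x y = x + y - jn x y"
  using jn_mt[of x y] by (simp add: algebra_simps)

definition pos where "pos x = jn x 0"
definition neg where "neg x = jn (-x) 0"

lemma pos_nonneg[simp,intro]: "lq 0 (pos x)" unfolding pos_def by simp
lemma neg_nonneg[simp,intro]: "lq 0 (neg x)" unfolding neg_def by simp
lemma pos_ge[simp,intro]: "lq x (pos x)" unfolding pos_def by simp
lemma neg_ge[simp,intro]: "lq (-x) (neg x)" unfolding neg_def by simp

lemma pos_eq: "pos x = x + neg x"
  using jn_add[of "-x" x 0] unfolding pos_def neg_def by (simp add: jn_comm add.commute)

lemma pos_minus_neg: "pos x - neg x = x"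
  using pos_eq[of x] by simp

lemma fabs_eq_jn: "fabs \<mu> x = jn x (-x)"
  unfolding fabs_def jn_def ..

lemma abs_eq: "fabs \<mu> x = pos x + neg x"
proof -
  have "jn (x + x) (-x + x) = jn x (-x) + x" by (rule jn_add)
  moreover have "jn (2 *\<^sub>R x) (2 *\<^sub>R 0) = 2 *\<^sub>R jn x 0" by (rule jn_scale) simp
  ultimately have "jn x (-x) = 2 *\<^sub>R pos x - x" unfolding pos_def
    by (simp add: scaleR_2 algebra_simps)
  then show ?thesis unfolding fabs_eq_jn using pos_eq[of x] by (simp add: scaleR_2 algebra_simps)
qed

lemma abs_nonneg[simp,intro]: "lq 0 (fabs \<mu> x)"
  unfolding abs_eq by (intro lq_sum_nonneg) auto
lemma abs_ge[simp,intro]: "lq x (fabs \<mu> x)" unfolding fabs_eq_jn by simp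
lemma abs_ge2[simp,intro]: "lq (-x) (fabs \<mu> x)" unfolding fabs_eq_jn by simp
lemma abs_least: "lq x y \<Longrightarrow> lq (-x) y \<Longrightarrow> lq (fabs \<mu> x) y"
  unfolding fabs_eq_jn by (rule jn_least)

lemma abs_of_nonneg: "lq 0 x \<Longrightarrow> fabs \<mu> x = x"
  unfolding fabs_eq_jn by (rule jn_eq_left) (use lq_neg[of 0 x] lq_trans in auto)

lemma pos_of_nonneg: "lq 0 x \<Longrightarrow> pos x = x"
  unfolding pos_def by (rule jn_eq_left)

lemma abs_triangle: "lq (fabs \<mu> (x + y)) (fabs \<mu> x + fabs \<mu> y)"
  using lq_add_mono[OF abs_ge abs_ge, of x y] lq_add_mono[OF abs_ge2 abs_ge2, of x y]
  by (intro abs_least) auto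

lemma abs_minus: "fabs \<mu> (-x) = fabs \<mu> x"
  unfolding fabs_eq_jn by (simp add: jn_comm)

lemma abs_scale: "fabs \<mu> (c *\<^sub>R x) = \<bar>c\<bar> *\<^sub>R fabs \<mu> x"
proof -
  have pos: "fabs \<mu> (c *\<^sub>R x) = c *\<^sub>R fabs \<mu> x" if "0 < c" for c
    unfolding fabs_eq_jn using jn_scale[OF that, of x "-x"] by simp
  show ?thesis
  proof (cases "c = 0")
    case True then show ?thesis by (simp add: abs_of_nonneg)
  next
    case False
    show ?thesis
    proof (cases "c > 0")
      case True then show ?thesis using pos by simp
    next
      case False
      then have "0 < -c" using \<open>c \<noteq> 0\<close> by simp
      from pos[OF this] have "fabs \<mu> (- (c *\<^sub>R x)) = (-c) *\<^sub>R fabs \<mu> x" by simp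
      then show ?thesis using False \<open>c \<noteq> 0\<close> by (simp add: abs_minus)
    qed
  qed
qed

lemma mt_pos_neg: "mt (pos x) (neg x) = 0"
proof -
  have "mt (pos x) (neg x) = mt (x + neg x) (0 + neg x)" using pos_eq by simp
  also have "\<dots> = mt x 0 + neg x" by (rule mt_add)
  also have "mt x 0 = - neg x" unfolding mt_def neg_def by simp
  finally show ?thesis by simp
qed

lemma mt_nonneg: "lq 0 x \<Longrightarrow> lq 0 y \<Longrightarrow> lq 0 (mt x y)"
  by (rule mt_greatest)

lemma riesz_ineq:
  assumes p: "lq 0 p" and q: "lq 0 q" and w: "lq 0 w"
  shows "lq (mt (p + q) w) (mt p w + mt q w)"
proof -
  let ?r = "mt (p + q) w - mt p w"
  have "lq ?r q"
  proof -
    have "lq (mt (p + q) w - q) (mt p w)"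
    proof (intro mt_greatest)
      show "lq (mt (p + q) w - q) p" using lq_add[OF mt_lb1[of "p+q" w], of "-q"] by simp
      show "lq (mt (p + q) w - q) w" using mt_lb2[of "p+q" w] lq_sub_le[OF q] lq_trans by blast
    qed
    then show ?thesis using lq_add_iff[of "mt (p + q) w - q" q "mt p w"] lq_add_iff[of _ "- mt p w"]
      by (smt (verit, ccfv_threshold) add_diff_cancel_left' diff_add_cancel diff_diff_eq2 lq_diff)
  qed
  moreover have "lq ?r w"
  proof -
    have "lq 0 (mt p w)" using p w by (rule mt_nonneg)
    then show ?thesis using mt_lb2[of "p+q" w] lq_sub_le lq_trans by blast
  qed
  ultimately have "lq ?r (mt q w)" by (rule mt_greatest)
  then show ?thesis using lq_add_iff[of ?r "mt p w" "mt q w"] by (simp add: add.commute)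
qed

lemma pos_mono: "lq x y \<Longrightarrow> lq (pos x) (pos y)"
  unfolding pos_def by (rule jn_mono) auto
lemma neg_antimono: "lq x y \<Longrightarrow> lq (neg y) (neg x)"
  unfolding neg_def by (rule jn_mono) (auto simp: lq_neg)

lemma abs_diff_le: "lq 0 a \<Longrightarrow> lq 0 b \<Longrightarrow> lq (fabs \<mu> (a - b)) (a + b)"
proof (intro abs_least)
  assume a: "lq 0 a" and b: "lq 0 b"
  have "lq (-b) b" using lq_neg[OF b] b lq_trans by fastforce
  then show "lq (a - b) (a + b)" using lq_add_mono[of a a "-b" b] by simp
  have "lq (-a) a" using lq_neg[OF a] a lq_trans by fastforce
  then show "lq (- (a - b)) (a + b)" using lq_add_mono[of "-a" a b b] by (simp add: algebra_simps)
qed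

lemma scale_le: assumes "lq 0 p" "c \<le> d" shows "lq (c *\<^sub>R p) (d *\<^sub>R p)"
proof -
  have "lq 0 ((d - c) *\<^sub>R p)" using lq_scale0[of "d - c" 0 p] assms by simp
  then show ?thesis using lq_diff[of "c *\<^sub>R p" "d *\<^sub>R p"] by (simp add: scaleR_diff_left)
qed

lemma disj_scale:
  assumes "lq 0 p" "lq 0 q" "mt p q = 0" "0 < c" "0 < d"
  shows "mt (c *\<^sub>R p) (d *\<^sub>R q) = 0"
proof (rule lq_antisym)
  let ?m = "max c d"
  have "lq (mt (c *\<^sub>R p) (d *\<^sub>R q)) (mt (?m *\<^sub>R p) (?m *\<^sub>R q))"
    by (rule mt_mono) (auto intro!: scale_le simp: assms)
  also have "mt (?m *\<^sub>R p) (?m *\<^sub>R q) = 0" using mt_scale[of ?m p q] assms by simp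
  finally show "lq (mt (c *\<^sub>R p) (d *\<^sub>R q)) 0" .
  show "lq 0 (mt (c *\<^sub>R p) (d *\<^sub>R q))"
    using assms lq_scale0[of c 0 p] lq_scale0[of d 0 q] by (intro mt_nonneg) auto
qed

lemma lq_trans_abs: "lq (fabs \<mu> x) y \<Longrightarrow> lq x y"
  using abs_ge lq_trans by blast

end

context rsp begin

declare lq_trans[trans]

lemma fdec_nonneg: "fdecreases_to_zero \<mu> I r y \<Longrightarrow> a \<in> I \<Longrightarrow> lq 0 (y a)"
  unfolding fdecreases_to_zero_def is_inf_on_def is_lb_on_def by auto

lemma fdec_greatest: "fdecreases_to_zero \<mu> I r y \<Longrightarrow> (\<And>a. a \<in> I \<Longrightarrow> lq z (y a)) \<Longrightarrow> lq z 0"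
  unfolding fdecreases_to_zero_def is_inf_on_def is_lb_on_def by auto

lemma fdec_tail:
  assumes d: "directed_set I r" and y: "fdecreases_to_zero \<mu> I r y" and b: "b \<in> I"
    and h: "\<And>a. a \<in> I \<Longrightarrow> r b a \<Longrightarrow> lq z (y a)"
  shows "lq z 0"
proof (rule fdec_greatest[OF y])
  fix g assume g: "g \<in> I"
  then obtain c where c: "c \<in> I" "r b c" "r g c" using d b unfolding directed_set_def by blast
  have "lq (y c) (y g)" using y c g unfolding fdecreases_to_zero_def by auto
  then show "lq z (y g)" using h[OF c(1,2)] lq_trans by blast
qed

lemma lq_swap: "lq a (c - b) \<Longrightarrow> lq b (c - a)"
  using lq_add[of a "c - b" "b - a"] by (simp add: algebra_simps)

lemma lq_plus_left: "lq (a + b) c \<Longrightarrow> lq b (c - a)"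
  using lq_add[of "a + b" c "- a"] by (simp add: algebra_simps)

lemma lq_minus_right: "lq b (c - a) \<Longrightarrow> lq (a + b) c"
  using lq_add[of b "c - a" a] by (simp add: algebra_simps)

lemma lq_sub_left: "lq a (b + c) \<Longrightarrow> lq (a - b) c"
  using lq_add[of a "b + c" "- b"] by (simp add: algebra_simps)

lemma is_finf_zeroI:
  "(\<And>a. a \<in> I \<Longrightarrow> lq 0 (y a)) \<Longrightarrow> (\<And>l. (\<And>a. a \<in> I \<Longrightarrow> lq l (y a)) \<Longrightarrow> lq l 0) \<Longrightarrow> is_finf \<mu> (y ` I) 0"
  unfolding is_inf_on_def is_lb_on_def by auto

lemma fdec_scale:
  assumes y: "fdecreases_to_zero \<mu> I r y" and c: "0 < c"
  shows "fdecreases_to_zero \<mu> I r (\<lambda>a. c *\<^sub>R y a)"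
  unfolding fdecreases_to_zero_def
proof (intro conjI ballI impI is_finf_zeroI)
  fix a b assume "a \<in> I" "b \<in> I" "r a b"
  then show "lq (c *\<^sub>R y b) (c *\<^sub>R y a)" using y c lq_scale unfolding fdecreases_to_zero_def by auto
next
  fix a assume "a \<in> I" then show "lq 0 (c *\<^sub>R y a)" using fdec_nonneg[OF y] lq_scale[OF c, of 0] by auto
next
  fix l assume "\<And>a. a \<in> I \<Longrightarrow> lq l (c *\<^sub>R y a)"
  then have "\<And>a. a \<in> I \<Longrightarrow> lq (inverse c *\<^sub>R l) (y a)"
    using lq_scale[of "inverse c" l] c by fastforce
  then have "lq (inverse c *\<^sub>R l) 0" by (rule fdec_greatest[OF y])
  then show "lq l 0" using lq_scale[OF c, of "inverse c *\<^sub>R l" 0] c by simp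
qed

end

locale rdc = rsp +
  assumes DC: "fuzzy_dedekind_complete \<mu>"
begin

definition sp where "sp A = sup_on UNIV lq A"

lemma sp_is: assumes "A \<noteq> {}" "\<And>a. a \<in> A \<Longrightarrow> lq a b" shows "is_sup_on UNIV lq A (sp A)"
proof -
  obtain s where s: "is_sup_on UNIV lq A s" using DC assms unfolding fuzzy_dedekind_complete_def is_ub_on_def by blast
  have "sp A = s" unfolding sp_def by (rule sup_on_unique[OF s]) (auto intro: lq_antisym)
  with s show ?thesis by simp
qed

lemma sp_ub: "a \<in> A \<Longrightarrow> (\<And>a. a \<in> A \<Longrightarrow> lq a b) \<Longrightarrow> lq a (sp A)"
  using sp_is[of A b] unfolding is_sup_on_def is_ub_on_def by blast

lemma sp_least: "A \<noteq> {} \<Longrightarrow> (\<And>a. a \<in> A \<Longrightarrow> lq a b) \<Longrightarrow> lq (sp A) b"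
  using sp_is[of A b] unfolding is_sup_on_def is_ub_on_def by blast

lemma sp_scale:
  assumes c: "0 < c" and ne: "A \<noteq> {}" and bd: "\<And>a. a \<in> A \<Longrightarrow> lq a b"
  shows "sp ((\<lambda>a. c *\<^sub>R a) ` A) = c *\<^sub>R sp A"
proof (rule lq_antisym)
  have bd2: "\<And>x. x \<in> (\<lambda>a. c *\<^sub>R a) ` A \<Longrightarrow> lq x (c *\<^sub>R b)" using bd lq_scale[OF c] by auto
  show "lq (sp ((\<lambda>a. c *\<^sub>R a) ` A)) (c *\<^sub>R sp A)"
    using ne by (intro sp_least) (auto intro!: lq_scale[OF c] sp_ub bd)
  have "lq (sp A) (inverse c *\<^sub>R sp ((\<lambda>a. c *\<^sub>R a) ` A))"
  proof (intro sp_least[OF ne])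
    fix a assume a: "a \<in> A"
    have "lq (c *\<^sub>R a) (sp ((\<lambda>a. c *\<^sub>R a) ` A))" using a bd2 by (intro sp_ub) auto
    then show "lq a (inverse c *\<^sub>R sp ((\<lambda>a. c *\<^sub>R a) ` A))"
      using lq_scale[of "inverse c" "c *\<^sub>R a"] c by fastforce
  qed
  then show "lq (c *\<^sub>R sp A) (sp ((\<lambda>a. c *\<^sub>R a) ` A))"
    using lq_scale[OF c, of "sp A"] c by fastforce
qed

lemma archimedean:
  assumes h: "\<And>n::nat. n \<ge> 1 \<Longrightarrow> lq (real n *\<^sub>R l) a"
  shows "lq l 0"
proof -
  let ?A = "(\<lambda>n::nat. real n *\<^sub>R l) ` {1..}"
  have ne: "?A \<noteq> {}" by auto
  have bd: "\<And>x. x \<in> ?A \<Longrightarrow> lq x a" using h by auto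
  have "lq (real n *\<^sub>R l) (sp ?A - l)" if "n \<ge> 1" for n
  proof -
    have "real (Suc n) *\<^sub>R l \<in> ?A" by (intro imageI) simp
    then have "lq (real (Suc n) *\<^sub>R l) (sp ?A)" using bd by (intro sp_ub)
    then show ?thesis using lq_add[of _ _ "-l"] by (fastforce simp: algebra_simps)
  qed
  then have "lq (sp ?A) (sp ?A - l)" by (intro sp_least[OF ne]) auto
  then show ?thesis using lq_add_iff[of "sp ?A" "-sp ?A + l" "sp ?A - l"] lq_add[of "sp ?A" "sp ?A - l" "l - sp ?A"]
    by (simp add: algebra_simps)
qed

end

locale ops = E: rsp \<mu> + F: rdc \<nu>
  for \<mu> :: "'a::real_vector \<Rightarrow> 'a \<Rightarrow> real" and \<nu> :: "'b::real_vector \<Rightarrow> 'b \<Rightarrow> real"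
begin

lemma positiveD: "fuzzy_positive \<mu> \<nu> P \<Longrightarrow> E.lq 0 x \<Longrightarrow> F.lq 0 (P x)"
  unfolding fuzzy_positive_def by auto

lemma op_leD: "op_le \<mu> \<nu> S R \<Longrightarrow> E.lq 0 x \<Longrightarrow> F.lq (S x) (R x)"
  unfolding op_le_def fuzzy_positive_def using F.lq_diff[of "S x" "R x"] by blast

lemma op_leI: "(\<And>x. E.lq 0 x \<Longrightarrow> F.lq (S x) (R x)) \<Longrightarrow> op_le \<mu> \<nu> S R"
  unfolding op_le_def fuzzy_positive_def using F.lq_diff by blast

lemma op_le_trans: "op_le \<mu> \<nu> S R \<Longrightarrow> op_le \<mu> \<nu> R Q \<Longrightarrow> op_le \<mu> \<nu> S Q"
  by (rule op_leI) (use op_leD F.lq_trans in blast)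

lemma op_le_refl: "op_le \<mu> \<nu> S S"
  by (rule op_leI) simp

lemma FLb_pos: assumes "linear P" "fuzzy_positive \<mu> \<nu> P" shows "P \<in> FLb \<mu> \<nu>"
  unfolding FLb_def
proof (intro CollectI conjI allI impI)
  show "linear P" by fact
  fix A assume "forder_bounded_set \<mu> A"
  then obtain u l where u: "\<And>a. a \<in> A \<Longrightarrow> E.lq a u" and l: "\<And>a. a \<in> A \<Longrightarrow> E.lq l a"
    unfolding forder_bounded_set_def is_ub_on_def is_lb_on_def by blast
  have "F.lq (P a) (P u)" if "a \<in> A" for a
  proof -
    have "F.lq 0 (P (u - a))" using positiveD[OF assms(2), of "u - a"] u[OF that] E.lq_diff[of a u] by blast
    then show ?thesis using real_vector.linear_diff[OF assms(1), of u a] F.lq_diff[of "P a" "P u"] by simp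
  qed
  moreover have "F.lq (P l) (P a)" if "a \<in> A" for a
  proof -
    have "F.lq 0 (P (a - l))" using positiveD[OF assms(2), of "a - l"] l[OF that] E.lq_diff[of l a] by blast
    then show ?thesis using real_vector.linear_diff[OF assms(1), of a l] F.lq_diff[of "P l" "P a"] by simp
  qed
  ultimately show "forder_bounded_set \<nu> (P ` A)"
    unfolding forder_bounded_set_def is_ub_on_def is_lb_on_def by blast
qed

lemma FLb_linear: "S \<in> FLb \<mu> \<nu> \<Longrightarrow> linear S" unfolding FLb_def by auto

lemma FLb_bdd: assumes "S \<in> FLb \<mu> \<nu>" "forder_bounded_set \<mu> A"
  shows "\<exists>l u. \<forall>a\<in>A. F.lq l (S a) \<and> F.lq (S a) u"
proof -
  have "forder_bounded_set \<nu> (S ` A)" using assms unfolding FLb_def by blast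
  then obtain u l where "fub \<nu> (S ` A) u" "flb \<nu> (S ` A) l" unfolding forder_bounded_set_def by blast
  then have "\<forall>a\<in>A. F.lq l (S a) \<and> F.lq (S a) u" unfolding is_ub_on_def is_lb_on_def by blast
  then show ?thesis by blast
qed

lemma interval_bdd: "forder_bounded_set \<mu> {y. E.lq 0 y \<and> E.lq y x}"
proof -
  have "fub \<mu> {y. E.lq 0 y \<and> E.lq y x} x" unfolding is_ub_on_def by blast
  moreover have "flb \<mu> {y. E.lq 0 y \<and> E.lq y x} 0" unfolding is_lb_on_def by blast
  ultimately show ?thesis unfolding forder_bounded_set_def by blast
qed

lemma FLb_add: assumes "S \<in> FLb \<mu> \<nu>" "R \<in> FLb \<mu> \<nu>" shows "(\<lambda>x. S x + R x) \<in> FLb \<mu> \<nu>"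
  unfolding FLb_def
proof (intro CollectI conjI allI impI)
  show "linear (\<lambda>x. S x + R x)" using assms FLb_linear real_vector.module_hom_add by blast
  fix A assume A: "forder_bounded_set \<mu> A"
  obtain l1 u1 where 1: "\<forall>a\<in>A. F.lq l1 (S a) \<and> F.lq (S a) u1" using FLb_bdd[OF assms(1) A] by blast
  obtain l2 u2 where 2: "\<forall>a\<in>A. F.lq l2 (R a) \<and> F.lq (R a) u2" using FLb_bdd[OF assms(2) A] by blast
  have "\<forall>a\<in>A. F.lq (l1 + l2) (S a + R a) \<and> F.lq (S a + R a) (u1 + u2)"
    using 1 2 F.lq_add_mono by blast
  then show "forder_bounded_set \<nu> ((\<lambda>x. S x + R x) ` A)"
    unfolding forder_bounded_set_def is_ub_on_def is_lb_on_def by blast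
qed

lemma FLb_scale: assumes "S \<in> FLb \<mu> \<nu>" shows "(\<lambda>x. c *\<^sub>R S x) \<in> FLb \<mu> \<nu>"
  unfolding FLb_def
proof (intro CollectI conjI allI impI)
  have lin: "linear S" using assms FLb_linear by blast
  show "linear (\<lambda>x. c *\<^sub>R S x)"
    by (rule linearI) (simp_all add: real_vector.linear_add[OF lin] real_vector.linear_scale[OF lin] algebra_simps)
  fix A assume A: "forder_bounded_set \<mu> A"
  obtain l1 u1 where 1: "\<forall>a\<in>A. F.lq l1 (S a) \<and> F.lq (S a) u1" using FLb_bdd[OF assms(1) A] by blast
  show "forder_bounded_set \<nu> ((\<lambda>x. c *\<^sub>R S x) ` A)"
  proof (cases "0 \<le> c")
    case True
    then have "\<forall>a\<in>A. F.lq (c *\<^sub>R l1) (c *\<^sub>R S a) \<and> F.lq (c *\<^sub>R S a) (c *\<^sub>R u1)"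
      using 1 F.lq_scale0 by blast
    then show ?thesis unfolding forder_bounded_set_def is_ub_on_def is_lb_on_def by blast
  next
    case False
    then have "\<forall>a\<in>A. F.lq (c *\<^sub>R u1) (c *\<^sub>R S a) \<and> F.lq (c *\<^sub>R S a) (c *\<^sub>R l1)"
      using 1 F.lq_scale_neg[of c] by auto
    then show ?thesis unfolding forder_bounded_set_def is_ub_on_def is_lb_on_def by blast
  qed
qed

lemma lin_pos_decomp: "linear S \<Longrightarrow> S x = S (E.pos x) - S (E.neg x)"
  using E.pos_minus_neg[of x] real_vector.linear_diff by metis

lemma op_le_antisym:
  assumes "linear S" "linear R" "op_le \<mu> \<nu> S R" "op_le \<mu> \<nu> R S"
  shows "S = R"
proof
  fix x
  have eq: "S y = R y" if "E.lq 0 y" for y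
    using op_leD[OF assms(3) that] op_leD[OF assms(4) that] F.lq_antisym by blast
  show "S x = R x" using lin_pos_decomp[OF assms(1), of x] lin_pos_decomp[OF assms(2), of x] eq by simp
qed

definition ext :: "('a \<Rightarrow> 'b) \<Rightarrow> 'a \<Rightarrow> 'b" where "ext \<phi> x = \<phi> (E.pos x) - \<phi> (E.neg x)"

lemma ext_props:
  assumes add: "\<And>x y. E.lq 0 x \<Longrightarrow> E.lq 0 y \<Longrightarrow> \<phi> (x + y) = \<phi> x + \<phi> y"
    and hom: "\<And>c x. 0 < c \<Longrightarrow> E.lq 0 x \<Longrightarrow> \<phi> (c *\<^sub>R x) = c *\<^sub>R \<phi> x"
  shows "linear (ext \<phi>)" and "\<And>x. E.lq 0 x \<Longrightarrow> ext \<phi> x = \<phi> x"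
proof -
  have z: "\<phi> 0 = 0" using add[of 0 0] by simp
  have key: "ext \<phi> x = \<phi> a - \<phi> b" if "E.lq 0 a" "E.lq 0 b" "x = a - b" for x a b
  proof -
    have "E.pos x + b = a + E.neg x" using that E.pos_minus_neg[of x] by (simp add: algebra_simps)
    then have "\<phi> (E.pos x) + \<phi> b = \<phi> a + \<phi> (E.neg x)" using add that by (metis E.neg_nonneg E.pos_nonneg)
    then show ?thesis unfolding ext_def by (simp add: algebra_simps)
  qed
  show nn: "ext \<phi> x = \<phi> x" if "E.lq 0 x" for x using key[of x 0 x] that z by simp
  show "linear (ext \<phi>)"
  proof (rule linearI)
    fix x y
    have "ext \<phi> (x + y) = \<phi> (E.pos x + E.pos y) - \<phi> (E.neg x + E.neg y)"
    proof (rule key)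
      have "x + y = (E.pos x - E.neg x) + (E.pos y - E.neg y)" by (simp add: E.pos_minus_neg)
      then show "x + y = E.pos x + E.pos y - (E.neg x + E.neg y)" by (simp add: algebra_simps)
    qed (auto intro: E.lq_sum_nonneg)
    then show "ext \<phi> (x + y) = ext \<phi> x + ext \<phi> y" unfolding ext_def by (simp add: add)
  next
    fix c :: real and x
    consider "c > 0" | "c = 0" | "c < 0" by linarith
    then show "ext \<phi> (c *\<^sub>R x) = c *\<^sub>R ext \<phi> x"
    proof cases
      case 1
      have "ext \<phi> (c *\<^sub>R x) = \<phi> (c *\<^sub>R E.pos x) - \<phi> (c *\<^sub>R E.neg x)"
      proof (rule key)
        have "c *\<^sub>R x = c *\<^sub>R (E.pos x - E.neg x)" by (simp add: E.pos_minus_neg)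
        then show "c *\<^sub>R x = c *\<^sub>R E.pos x - c *\<^sub>R E.neg x" by (simp add: scaleR_diff_right)
      qed (use E.lq_scale[OF 1, of 0] in auto)
      then show ?thesis unfolding ext_def using 1 by (simp add: hom scaleR_diff_right)
    next
      case 2 then show ?thesis using nn[of 0] z by simp
    next
      case 3
      then have c: "0 < -c" by simp
      have "ext \<phi> (c *\<^sub>R x) = \<phi> ((-c) *\<^sub>R E.neg x) - \<phi> ((-c) *\<^sub>R E.pos x)"
      proof (rule key)
        have "c *\<^sub>R x = c *\<^sub>R (E.pos x - E.neg x)" by (simp add: E.pos_minus_neg)
        then show "c *\<^sub>R x = (-c) *\<^sub>R E.neg x - (-c) *\<^sub>R E.pos x" by (simp add: algebra_simps)
      qed (use E.lq_scale[OF c, of 0] in auto)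
      also have "\<dots> = (-c) *\<^sub>R \<phi> (E.neg x) - (-c) *\<^sub>R \<phi> (E.pos x)"
        using hom[OF c, of "E.neg x"] hom[OF c, of "E.pos x"] by simp
      finally show ?thesis unfolding ext_def by (simp add: algebra_simps)
    qed
  qed
qed

end

context ops begin

definition Qs where "Qs T x = (\<lambda>y. T y - T (x - y)) ` {y. E.lq 0 y \<and> E.lq y x}"
definition psi where "psi T x = F.sp (Qs T x)"

lemma Qs_bdd: assumes "T \<in> FLb \<mu> \<nu>" shows "\<exists>b. \<forall>q\<in>Qs T x. F.lq q b"
proof -
  obtain l u where lu: "\<forall>a\<in>{y. E.lq 0 y \<and> E.lq y x}. F.lq l (T a) \<and> F.lq (T a) u"
    using FLb_bdd[OF assms interval_bdd] by blast
  have "F.lq (T y - T (x - y)) (u - l)" if "E.lq 0 y" "E.lq y x" for y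
  proof -
    have "E.lq 0 (x - y)" using that E.lq_diff by blast
    moreover have "E.lq (x - y) x" using E.lq_sub_le[OF that(1)] by simp
    ultimately have "F.lq l (T (x - y))" using lu by blast
    then have "F.lq (- T (x - y)) (- l)" by (rule F.lq_neg)
    moreover have "F.lq (T y) u" using lu that by blast
    ultimately show ?thesis using F.lq_add_mono by fastforce
  qed
  then show ?thesis unfolding Qs_def by blast
qed

lemma Qs_ne: "E.lq 0 x \<Longrightarrow> Qs T x \<noteq> {}"
  unfolding Qs_def by blast

lemma psi_ub: assumes "T \<in> FLb \<mu> \<nu>" "E.lq 0 y" "E.lq y x"
  shows "F.lq (T y - T (x - y)) (psi T x)"
proof -
  obtain b where b: "\<forall>q\<in>Qs T x. F.lq q b" using Qs_bdd[OF assms(1)] by blast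
  have "T y - T (x - y) \<in> Qs T x" unfolding Qs_def using assms by blast
  then show ?thesis unfolding psi_def using b by (intro F.sp_ub) auto
qed

lemma psi_least: assumes "E.lq 0 x" "\<And>y. E.lq 0 y \<Longrightarrow> E.lq y x \<Longrightarrow> F.lq (T y - T (x - y)) b"
  shows "F.lq (psi T x) b"
  unfolding psi_def using assms by (intro F.sp_least Qs_ne) (auto simp: Qs_def)

lemma psi_add:
  assumes T: "T \<in> FLb \<mu> \<nu>" and x: "E.lq 0 x" and z: "E.lq 0 z"
  shows "psi T (x + z) = psi T x + psi T z"
proof (rule F.lq_antisym)
  have lin: "linear T" using T FLb_linear by blast
  have xz: "E.lq 0 (x + z)" using x z E.lq_sum_nonneg by blast
  show "F.lq (psi T (x + z)) (psi T x + psi T z)"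
  proof (rule psi_least[OF xz])
    fix y assume y: "E.lq 0 y" "E.lq y (x + z)"
    let ?y1 = "E.mt y x" let ?y2 = "y - E.mt y x"
    have y1: "E.lq 0 ?y1" "E.lq ?y1 x" using y x by (auto intro: E.mt_nonneg)
    have "?y2 = E.jn y x - x" using E.mt_eq[of y x] by (simp add: algebra_simps)
    moreover have "E.lq (E.jn y x) (x + z)"
      using y E.lq_le_add[OF z, of x] by (intro E.jn_least) auto
    moreover have "E.lq 0 (E.jn y x - x)" using E.lq_diff[of x "E.jn y x"] by simp
    moreover have "E.lq (E.jn y x - x) z" using E.lq_add[OF \<open>E.lq (E.jn y x) (x + z)\<close>, of "-x"] by simp
    ultimately have y2: "E.lq 0 ?y2" "E.lq ?y2 z" by simp_all
    have "T y - T (x + z - y) = (T ?y1 - T (x - ?y1)) + (T ?y2 - T (z - ?y2))"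
      using real_vector.linear_diff[OF lin] real_vector.linear_add[OF lin]
      by (simp add: algebra_simps)
    then show "F.lq (T y - T (x + z - y)) (psi T x + psi T z)"
      using psi_ub[OF T y1] psi_ub[OF T y2] F.lq_add_mono by simp
  qed
  show "F.lq (psi T x + psi T z) (psi T (x + z))"
  proof -
    have "F.lq (psi T x) (psi T (x + z) - psi T z)"
    proof (rule psi_least[OF x])
      fix y1 assume y1: "E.lq 0 y1" "E.lq y1 x"
      have "F.lq (psi T z) (psi T (x + z) - (T y1 - T (x - y1)))"
      proof (rule psi_least[OF z])
        fix y2 assume y2: "E.lq 0 y2" "E.lq y2 z"
        have "E.lq 0 (y1 + y2)" "E.lq (y1 + y2) (x + z)" using y1 y2 E.lq_sum_nonneg E.lq_add_mono by auto
        then have "F.lq (T (y1 + y2) - T (x + z - (y1 + y2))) (psi T (x + z))" by (rule psi_ub[OF T])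
        moreover have "T (y1 + y2) - T (x + z - (y1 + y2)) = (T y1 - T (x - y1)) + (T y2 - T (z - y2))"
        proof -
          have e: "x + z - (y1 + y2) = (x - y1) + (z - y2)" by (simp add: algebra_simps)
          show ?thesis by (simp only: e real_vector.linear_add[OF lin]) (simp add: algebra_simps)
        qed
        ultimately have "F.lq ((T y1 - T (x - y1)) + (T y2 - T (z - y2))) (psi T (x + z))" by simp
        then have "F.lq ((T y1 - T (x - y1)) + (T y2 - T (z - y2)) + - (T y1 - T (x - y1))) (psi T (x + z) + - (T y1 - T (x - y1)))"
          by (rule F.lq_add)
        then show "F.lq (T y2 - T (z - y2)) (psi T (x + z) - (T y1 - T (x - y1)))"
          by (simp add: algebra_simps)
      qed
      then show "F.lq (T y1 - T (x - y1)) (psi T (x + z) - psi T z)"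
        by (rule F.lq_swap)
    qed
    from F.lq_minus_right[OF this] show ?thesis by (simp add: add.commute)
  qed
qed

lemma psi_hom:
  assumes T: "T \<in> FLb \<mu> \<nu>" and c: "0 < c" and x: "E.lq 0 x"
  shows "psi T (c *\<^sub>R x) = c *\<^sub>R psi T x"
proof -
  have lin: "linear T" using T FLb_linear by blast
  have "Qs T (c *\<^sub>R x) = (\<lambda>q. c *\<^sub>R q) ` Qs T x"
  proof -
    have "{y. E.lq 0 y \<and> E.lq y (c *\<^sub>R x)} = (\<lambda>y. c *\<^sub>R y) ` {y. E.lq 0 y \<and> E.lq y x}"
    proof (intro set_eqI iffI)
      fix y assume "y \<in> {y. E.lq 0 y \<and> E.lq y (c *\<^sub>R x)}"
      then have "E.lq 0 (inverse c *\<^sub>R y)" "E.lq (inverse c *\<^sub>R y) x"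
        using E.lq_scale[of "inverse c" 0 y] E.lq_scale[of "inverse c" y "c *\<^sub>R x"] c by auto
      moreover have "y = c *\<^sub>R (inverse c *\<^sub>R y)" using c by simp
      ultimately show "y \<in> (\<lambda>y. c *\<^sub>R y) ` {y. E.lq 0 y \<and> E.lq y x}" by blast
    next
      fix y assume "y \<in> (\<lambda>y. c *\<^sub>R y) ` {y. E.lq 0 y \<and> E.lq y x}"
      then show "y \<in> {y. E.lq 0 y \<and> E.lq y (c *\<^sub>R x)}" using E.lq_scale[OF c] by fastforce
    qed
    moreover have "T (c *\<^sub>R y) - T (c *\<^sub>R x - c *\<^sub>R y) = c *\<^sub>R (T y - T (x - y))" for y
      using real_vector.linear_diff[OF lin] real_vector.linear_scale[OF lin]
      by (simp add: scaleR_diff_right[symmetric])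
    ultimately show ?thesis unfolding Qs_def by (auto simp: image_image)
  qed
  moreover obtain b where "\<forall>q\<in>Qs T x. F.lq q b" using Qs_bdd[OF T] by blast
  ultimately show ?thesis unfolding psi_def using F.sp_scale[OF c Qs_ne[OF x], where b=b] by auto
qed

lemma psi_ge: "T \<in> FLb \<mu> \<nu> \<Longrightarrow> E.lq 0 x \<Longrightarrow> F.lq (T x) (psi T x)"
  using psi_ub[of T x x] real_vector.linear_0[OF FLb_linear, of T] by simp

lemma psi_ge2: "T \<in> FLb \<mu> \<nu> \<Longrightarrow> E.lq 0 x \<Longrightarrow> F.lq (- T x) (psi T x)"
  using psi_ub[of T 0 x] real_vector.linear_0[OF FLb_linear, of T] by simp

definition Mabs where "Mabs T = ext (psi T)"

lemma Mabs_props: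
  assumes T: "T \<in> FLb \<mu> \<nu>"
  shows "linear (Mabs T)" "\<And>x. E.lq 0 x \<Longrightarrow> Mabs T x = psi T x"
  unfolding Mabs_def using ext_props[of "psi T"] psi_add[OF T] psi_hom[OF T] by auto

lemma Mabs_sup:
  assumes T: "T \<in> FLb \<mu> \<nu>"
  shows "is_sup_on (FLb \<mu> \<nu>) (op_le \<mu> \<nu>) {T, \<lambda>x. - T x} (Mabs T)"
proof -
  have lin: "linear T" using T FLb_linear by blast
  have ge: "op_le \<mu> \<nu> T (Mabs T)" by (rule op_leI) (simp add: Mabs_props[OF T] psi_ge[OF T])
  have ge2: "op_le \<mu> \<nu> (\<lambda>x. - T x) (Mabs T)" by (rule op_leI) (simp add: Mabs_props[OF T] psi_ge2[OF T])
  have pos: "fuzzy_positive \<mu> \<nu> (Mabs T)"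
    unfolding fuzzy_positive_def
  proof (intro allI impI)
    fix x assume x: "E.lq 0 x"
    have "F.lq (T x + - T x) (Mabs T x + Mabs T x)"
      using op_leD[OF ge x] op_leD[OF ge2 x] F.lq_add_mono by blast
    then have "F.lq 0 (2 *\<^sub>R Mabs T x)" by (simp add: scaleR_2)
    then show "F.lq 0 (Mabs T x)" using F.lq_scale_iff[of 2 0 "Mabs T x"] by simp
  qed
  have inF: "Mabs T \<in> FLb \<mu> \<nu>" by (rule FLb_pos[OF Mabs_props(1)[OF T] pos])
  have least: "op_le \<mu> \<nu> (Mabs T) R" if R: "R \<in> FLb \<mu> \<nu>" "op_le \<mu> \<nu> T R" "op_le \<mu> \<nu> (\<lambda>x. - T x) R" for R
  proof (rule op_leI)
    fix x assume x: "E.lq 0 x"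
    have "F.lq (psi T x) (R x)"
    proof (rule psi_least[OF x])
      fix y assume y: "E.lq 0 y" "E.lq y x"
      have y2: "E.lq 0 (x - y)" using y E.lq_diff by blast
      have "F.lq (T y + - T (x - y)) (R y + R (x - y))"
        using op_leD[OF R(2) y(1)] op_leD[OF R(3) y2] F.lq_add_mono by blast
      then show "F.lq (T y - T (x - y)) (R x)"
        using real_vector.linear_add[OF FLb_linear[OF R(1)], of y "x - y"] by simp
    qed
    then show "F.lq (Mabs T x) (R x)" using Mabs_props(2)[OF T x] by simp
  qed
  show ?thesis unfolding is_sup_on_def is_ub_on_def using ge ge2 inF least by auto
qed

lemma op_abs_eq: assumes T: "T \<in> FLb \<mu> \<nu>" shows "op_abs \<mu> \<nu> T = Mabs T"
  unfolding op_abs_def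
  by (rule sup_on_unique[OF Mabs_sup[OF T]]) (auto intro: op_le_antisym FLb_linear)

lemma oa_sup: "T \<in> FLb \<mu> \<nu> \<Longrightarrow> is_sup_on (FLb \<mu> \<nu>) (op_le \<mu> \<nu>) {T, \<lambda>x. - T x} (op_abs \<mu> \<nu> T)"
  using op_abs_eq Mabs_sup by simp

lemma oa_FLb: "T \<in> FLb \<mu> \<nu> \<Longrightarrow> op_abs \<mu> \<nu> T \<in> FLb \<mu> \<nu>"
  using oa_sup unfolding is_sup_on_def is_ub_on_def by blast
lemma oa_lin: "T \<in> FLb \<mu> \<nu> \<Longrightarrow> linear (op_abs \<mu> \<nu> T)"
  using oa_FLb FLb_linear by blast
lemma oa_ge: "T \<in> FLb \<mu> \<nu> \<Longrightarrow> op_le \<mu> \<nu> T (op_abs \<mu> \<nu> T)"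
  using oa_sup unfolding is_sup_on_def is_ub_on_def by blast
lemma oa_ge2: "T \<in> FLb \<mu> \<nu> \<Longrightarrow> op_le \<mu> \<nu> (\<lambda>x. - T x) (op_abs \<mu> \<nu> T)"
  using oa_sup unfolding is_sup_on_def is_ub_on_def by blast
lemma oa_least: "T \<in> FLb \<mu> \<nu> \<Longrightarrow> R \<in> FLb \<mu> \<nu> \<Longrightarrow> op_le \<mu> \<nu> T R \<Longrightarrow> op_le \<mu> \<nu> (\<lambda>x. - T x) R \<Longrightarrow> op_le \<mu> \<nu> (op_abs \<mu> \<nu> T) R"
  using oa_sup[of T] unfolding is_sup_on_def is_ub_on_def by blast
lemma oa_psi: "T \<in> FLb \<mu> \<nu> \<Longrightarrow> E.lq 0 x \<Longrightarrow> op_abs \<mu> \<nu> T x = psi T x"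
  using op_abs_eq Mabs_props by simp

lemma oa_nonneg: assumes "T \<in> FLb \<mu> \<nu>" "E.lq 0 x" shows "F.lq 0 (op_abs \<mu> \<nu> T x)"
proof -
  have "F.lq (T x + - T x) (op_abs \<mu> \<nu> T x + op_abs \<mu> \<nu> T x)"
    using op_leD[OF oa_ge[OF assms(1)] assms(2)] op_leD[OF oa_ge2[OF assms(1)] assms(2)] F.lq_add_mono by blast
  then have "F.lq 0 (2 *\<^sub>R op_abs \<mu> \<nu> T x)" by (simp add: scaleR_2)
  then show ?thesis using F.lq_scale_iff[of 2 0] by simp
qed

lemma oa_positive: "T \<in> FLb \<mu> \<nu> \<Longrightarrow> fuzzy_positive \<mu> \<nu> (op_abs \<mu> \<nu> T)"
  unfolding fuzzy_positive_def using oa_nonneg by blast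

lemma oa_of_pos: assumes "linear P" "fuzzy_positive \<mu> \<nu> P" shows "op_abs \<mu> \<nu> P = P"
proof -
  have P: "P \<in> FLb \<mu> \<nu>" by (rule FLb_pos[OF assms])
  have "is_sup_on (FLb \<mu> \<nu>) (op_le \<mu> \<nu>) {P, \<lambda>x. - P x} P"
    unfolding is_sup_on_def is_ub_on_def
  proof (intro conjI allI impI ballI)
    show "P \<in> FLb \<mu> \<nu>" by fact
    fix a assume "a \<in> {P, \<lambda>x. - P x}"
    moreover have "op_le \<mu> \<nu> (\<lambda>x. - P x) P"
    proof (rule op_leI)
      fix x assume x: "E.lq 0 x"
      have "F.lq (- P x) 0" using F.lq_neg[OF positiveD[OF assms(2) x]] by simp
      then show "F.lq (- P x) (P x)" using positiveD[OF assms(2) x] F.lq_trans by blast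
    qed
    ultimately show "op_le \<mu> \<nu> a P" using op_le_refl by auto
  next
    fix u assume "u \<in> FLb \<mu> \<nu> \<and> (\<forall>a\<in>{P, \<lambda>x. - P x}. op_le \<mu> \<nu> a u)"
    then show "op_le \<mu> \<nu> P u" by blast
  qed
  then show ?thesis unfolding op_abs_def
    by (rule sup_on_unique) (auto intro: op_le_antisym FLb_linear)
qed

lemma oa_diff: assumes T: "T \<in> FLb \<mu> \<nu>" and a: "E.lq 0 a" and b: "E.lq 0 b"
  shows "F.lq (T a - T b) (op_abs \<mu> \<nu> T (a + b))"
proof -
  have "F.lq (T a + - T b) (op_abs \<mu> \<nu> T a + op_abs \<mu> \<nu> T b)"
    using op_leD[OF oa_ge[OF T] a] op_leD[OF oa_ge2[OF T] b] F.lq_add_mono by blast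
  then show ?thesis using real_vector.linear_add[OF oa_lin[OF T], of a b] by simp
qed

lemma oa_app: assumes T: "T \<in> FLb \<mu> \<nu>"
  shows "F.lq (fabs \<nu> (T x)) (op_abs \<mu> \<nu> T (fabs \<mu> x))"
proof (rule F.abs_least)
  have lin: "linear T" using T FLb_linear by blast
  have "T x = T (E.pos x) - T (E.neg x)" by (rule lin_pos_decomp[OF lin])
  then show "F.lq (T x) (op_abs \<mu> \<nu> T (fabs \<mu> x))"
    using oa_diff[OF T E.pos_nonneg E.neg_nonneg, of x x] E.abs_eq[of x] by simp
  have "- T x = T (E.neg x) - T (E.pos x)" using \<open>T x = _\<close> by simp
  then show "F.lq (- T x) (op_abs \<mu> \<nu> T (fabs \<mu> x))"
    using oa_diff[OF T E.neg_nonneg E.pos_nonneg, of x x] E.abs_eq[of x] by (simp add: add.commute)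
qed

end

context ops begin

lemma pos_op_mono: assumes "linear P" "fuzzy_positive \<mu> \<nu> P" "E.lq a b" shows "F.lq (P a) (P b)"
proof -
  have "F.lq 0 (P (b - a))" using positiveD[OF assms(2)] E.lq_diff[of a b] assms(3) by blast
  then show ?thesis using real_vector.linear_diff[OF assms(1), of b a] F.lq_diff[of "P a" "P b"] by simp
qed

lemma oa_mono: "T \<in> FLb \<mu> \<nu> \<Longrightarrow> E.lq a b \<Longrightarrow> F.lq (op_abs \<mu> \<nu> T a) (op_abs \<mu> \<nu> T b)"
  using pos_op_mono[OF oa_lin oa_positive] by blast

lemma oa_add: assumes S: "S \<in> FLb \<mu> \<nu>" and R: "R \<in> FLb \<mu> \<nu>"
  shows "op_le \<mu> \<nu> (op_abs \<mu> \<nu> (\<lambda>x. S x + R x)) (\<lambda>x. op_abs \<mu> \<nu> S x + op_abs \<mu> \<nu> R x)"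
proof (rule oa_least)
  show "(\<lambda>x. S x + R x) \<in> FLb \<mu> \<nu>" by (rule FLb_add[OF S R])
  show "(\<lambda>x. op_abs \<mu> \<nu> S x + op_abs \<mu> \<nu> R x) \<in> FLb \<mu> \<nu>" by (rule FLb_add[OF oa_FLb[OF S] oa_FLb[OF R]])
  show "op_le \<mu> \<nu> (\<lambda>x. S x + R x) (\<lambda>x. op_abs \<mu> \<nu> S x + op_abs \<mu> \<nu> R x)"
    by (rule op_leI) (use op_leD[OF oa_ge[OF S]] op_leD[OF oa_ge[OF R]] F.lq_add_mono in blast)
  show "op_le \<mu> \<nu> (\<lambda>x. - (S x + R x)) (\<lambda>x. op_abs \<mu> \<nu> S x + op_abs \<mu> \<nu> R x)"
  proof (rule op_leI)
    fix x assume x: "E.lq 0 x"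
    have "F.lq (- S x + - R x) (op_abs \<mu> \<nu> S x + op_abs \<mu> \<nu> R x)"
      using op_leD[OF oa_ge2[OF S] x] op_leD[OF oa_ge2[OF R] x] F.lq_add_mono by blast
    then show "F.lq (- (S x + R x)) (op_abs \<mu> \<nu> S x + op_abs \<mu> \<nu> R x)" by simp
  qed
qed

lemma oa_scale: assumes S: "S \<in> FLb \<mu> \<nu>"
  shows "op_le \<mu> \<nu> (op_abs \<mu> \<nu> (\<lambda>x. c *\<^sub>R S x)) (\<lambda>x. \<bar>c\<bar> *\<^sub>R op_abs \<mu> \<nu> S x)"
proof (rule oa_least)
  show "(\<lambda>x. c *\<^sub>R S x) \<in> FLb \<mu> \<nu>" by (rule FLb_scale[OF S])
  show "(\<lambda>x. \<bar>c\<bar> *\<^sub>R op_abs \<mu> \<nu> S x) \<in> FLb \<mu> \<nu>" by (rule FLb_scale[OF oa_FLb[OF S]])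
  have *: "F.lq (c *\<^sub>R S x) (\<bar>c\<bar> *\<^sub>R op_abs \<mu> \<nu> S x) \<and> F.lq (- (c *\<^sub>R S x)) (\<bar>c\<bar> *\<^sub>R op_abs \<mu> \<nu> S x)"
    if x: "E.lq 0 x" for x
  proof (cases "0 \<le> c")
    case True
    then show ?thesis using F.lq_scale0[OF True op_leD[OF oa_ge[OF S] x]] F.lq_scale0[OF True op_leD[OF oa_ge2[OF S] x]] by simp
  next
    case False
    then have c: "0 \<le> -c" by simp
    show ?thesis using F.lq_scale0[OF c op_leD[OF oa_ge[OF S] x]] F.lq_scale0[OF c op_leD[OF oa_ge2[OF S] x]] False by simp
  qed
  show "op_le \<mu> \<nu> (\<lambda>x. c *\<^sub>R S x) (\<lambda>x. \<bar>c\<bar> *\<^sub>R op_abs \<mu> \<nu> S x)"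
    by (rule op_leI) (use * in blast)
  show "op_le \<mu> \<nu> (\<lambda>x. - (c *\<^sub>R S x)) (\<lambda>x. \<bar>c\<bar> *\<^sub>R op_abs \<mu> \<nu> S x)"
    by (rule op_leI) (use * in blast)
qed

lemma zero_lin: "linear (\<lambda>x::'a. 0::'b)" by (rule linearI) auto
lemma zero_pos: "fuzzy_positive \<mu> \<nu> (\<lambda>x. 0)" unfolding fuzzy_positive_def by simp

definition Kset where "Kset T = {S \<in> FLb \<mu> \<nu>. \<exists>c>0. op_le \<mu> \<nu> (op_abs \<mu> \<nu> S) (\<lambda>x. c *\<^sub>R op_abs \<mu> \<nu> T x)}"

lemma op_le_scale_mono: assumes T: "T \<in> FLb \<mu> \<nu>" and "c \<le> d"
  shows "op_le \<mu> \<nu> (\<lambda>x. c *\<^sub>R op_abs \<mu> \<nu> T x) (\<lambda>x. d *\<^sub>R op_abs \<mu> \<nu> T x)"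
  by (rule op_leI) (use F.scale_le[OF oa_nonneg[OF T] assms(2)] in blast)

lemma Kset_ideal: assumes T: "T \<in> FLb \<mu> \<nu>" shows "op_ideal \<mu> \<nu> (Kset T)" "T \<in> Kset T"
proof -
  show "T \<in> Kset T" unfolding Kset_def using T by (auto intro!: exI[of _ 1] op_le_refl)
  show "op_ideal \<mu> \<nu> (Kset T)" unfolding op_ideal_def op_subspace_def
  proof (intro conjI ballI allI impI)
    show "Kset T \<subseteq> FLb \<mu> \<nu>" unfolding Kset_def by blast
    show "(\<lambda>x. 0) \<in> Kset T"
      unfolding Kset_def using oa_of_pos[OF zero_lin zero_pos] FLb_pos[OF zero_lin zero_pos]
      by (auto intro!: exI[of _ 1] op_leI oa_nonneg[OF T])
  next
    fix S R assume S: "S \<in> Kset T" and R: "R \<in> Kset T"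
    obtain c where c: "c > 0" "op_le \<mu> \<nu> (op_abs \<mu> \<nu> S) (\<lambda>x. c *\<^sub>R op_abs \<mu> \<nu> T x)" using S unfolding Kset_def by blast
    obtain d where d: "d > 0" "op_le \<mu> \<nu> (op_abs \<mu> \<nu> R) (\<lambda>x. d *\<^sub>R op_abs \<mu> \<nu> T x)" using R unfolding Kset_def by blast
    have SF: "S \<in> FLb \<mu> \<nu>" and RF: "R \<in> FLb \<mu> \<nu>" using S R unfolding Kset_def by auto
    have "op_le \<mu> \<nu> (\<lambda>x. op_abs \<mu> \<nu> S x + op_abs \<mu> \<nu> R x) (\<lambda>x. (c + d) *\<^sub>R op_abs \<mu> \<nu> T x)"
      by (rule op_leI) (use op_leD[OF c(2)] op_leD[OF d(2)] F.lq_add_mono in \<open>fastforce simp: scaleR_add_left\<close>)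
    then have "op_le \<mu> \<nu> (op_abs \<mu> \<nu> (\<lambda>x. S x + R x)) (\<lambda>x. (c + d) *\<^sub>R op_abs \<mu> \<nu> T x)"
      using oa_add[OF SF RF] op_le_trans by blast
    then show "(\<lambda>x. S x + R x) \<in> Kset T" unfolding Kset_def using FLb_add[OF SF RF] c d
      by (auto intro!: exI[of _ "c + d"])
  next
    fix a :: real and S assume S: "S \<in> Kset T"
    obtain c where c: "c > 0" "op_le \<mu> \<nu> (op_abs \<mu> \<nu> S) (\<lambda>x. c *\<^sub>R op_abs \<mu> \<nu> T x)" using S unfolding Kset_def by blast
    have SF: "S \<in> FLb \<mu> \<nu>" using S unfolding Kset_def by auto
    have 1: "op_le \<mu> \<nu> (\<lambda>x. \<bar>a\<bar> *\<^sub>R op_abs \<mu> \<nu> S x) (\<lambda>x. (\<bar>a\<bar> * c) *\<^sub>R op_abs \<mu> \<nu> T x)"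
      by (rule op_leI) (use F.lq_scale0[of "\<bar>a\<bar>", OF _ op_leD[OF c(2)]] in auto)
    have 2: "op_le \<mu> \<nu> (\<lambda>x. (\<bar>a\<bar> * c) *\<^sub>R op_abs \<mu> \<nu> T x) (\<lambda>x. ((\<bar>a\<bar> + 1) * c) *\<^sub>R op_abs \<mu> \<nu> T x)"
      by (rule op_le_scale_mono[OF T]) (use c in \<open>simp add: algebra_simps\<close>)
    have "op_le \<mu> \<nu> (op_abs \<mu> \<nu> (\<lambda>x. a *\<^sub>R S x)) (\<lambda>x. ((\<bar>a\<bar> + 1) * c) *\<^sub>R op_abs \<mu> \<nu> T x)"
      using oa_scale[OF SF, of a] op_le_trans[OF _ op_le_trans[OF 1 2]] by blast
    moreover have "(\<bar>a\<bar> + 1) * c > 0" using c by (simp add: add_pos_nonneg)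
    ultimately show "(\<lambda>x. a *\<^sub>R S x) \<in> Kset T" unfolding Kset_def using FLb_scale[OF SF] by blast
  next
    fix S R assume h: "S \<in> FLb \<mu> \<nu> \<and> R \<in> Kset T \<and> op_le \<mu> \<nu> (op_abs \<mu> \<nu> S) (op_abs \<mu> \<nu> R)"
    then obtain c where c: "c > 0" "op_le \<mu> \<nu> (op_abs \<mu> \<nu> R) (\<lambda>x. c *\<^sub>R op_abs \<mu> \<nu> T x)" unfolding Kset_def by blast
    then show "S \<in> Kset T" unfolding Kset_def using h op_le_trans by blast
  qed
qed

lemma gen_ideal_bound: assumes T: "T \<in> FLb \<mu> \<nu>" and S: "S \<in> gen_ideal \<mu> \<nu> T"
  shows "S \<in> FLb \<mu> \<nu> \<and> (\<exists>c>0. op_le \<mu> \<nu> (op_abs \<mu> \<nu> S) (\<lambda>x. c *\<^sub>R op_abs \<mu> \<nu> T x))"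
proof -
  have "S \<in> Kset T" using S Kset_ideal[OF T] unfolding gen_ideal_def by blast
  then show ?thesis unfolding Kset_def by blast
qed

lemma gen_ideal_mem: assumes "S \<in> FLb \<mu> \<nu>" "op_le \<mu> \<nu> (op_abs \<mu> \<nu> S) (op_abs \<mu> \<nu> T)"
  shows "S \<in> gen_ideal \<mu> \<nu> T"
  unfolding gen_ideal_def op_ideal_def using assms by blast

lemma null_ideal_ideal: assumes S: "S \<in> FLb \<mu> \<nu>" shows "fuzzy_ideal \<mu> (null_ideal \<mu> \<nu> S)"
proof -
  let ?P = "op_abs \<mu> \<nu> S"
  have lin: "linear ?P" by (rule oa_lin[OF S])
  have zero: "?P (fabs \<mu> x) = 0" if "E.lq (fabs \<mu> x) a" "?P a = 0" for x a
    using oa_mono[OF S that(1)] oa_nonneg[OF S E.abs_nonneg, of x] that(2) F.lq_antisym by simp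
  show ?thesis unfolding fuzzy_ideal_def null_ideal_def
  proof (intro conjI allI impI real_vector.subspaceI)
    show "0 \<in> {x. ?P (fabs \<mu> x) = 0}" using E.abs_of_nonneg[of 0] real_vector.linear_0[OF lin] by simp
  next
    fix x y assume "x \<in> {x. ?P (fabs \<mu> x) = 0}" "y \<in> {x. ?P (fabs \<mu> x) = 0}"
    then have "?P (fabs \<mu> x + fabs \<mu> y) = 0" using real_vector.linear_add[OF lin] by simp
    then show "x + y \<in> {x. ?P (fabs \<mu> x) = 0}" using zero[OF E.abs_triangle] by simp
  next
    fix c :: real and x assume "x \<in> {x. ?P (fabs \<mu> x) = 0}"
    then show "c *\<^sub>R x \<in> {x. ?P (fabs \<mu> x) = 0}"
      using E.abs_scale[of c x] real_vector.linear_scale[OF lin] by simp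
  next
    fix x y assume "fle \<mu> (fabs \<mu> x) (fabs \<mu> y) \<and> y \<in> {x. ?P (fabs \<mu> x) = 0}"
    then show "x \<in> {x. ?P (fabs \<mu> x) = 0}" using zero by blast
  qed
qed

end

context ops begin

lemma inf_get: "is_finf \<nu> (f ` I) 0 \<Longrightarrow> (\<And>a. a \<in> I \<Longrightarrow> F.lq l (f a)) \<Longrightarrow> F.lq l 0"
  unfolding is_inf_on_def is_lb_on_def by auto

lemma M1:
  assumes T: "T \<in> FLb \<mu> \<nu>" and d: "directed_set I r"
    and pres: "\<And>x. forder_converges \<mu> I r x 0 \<Longrightarrow> forder_converges \<nu> I r (\<lambda>a. T (x a)) 0"
    and y: "fdecreases_to_zero \<mu> I r y"
  shows "is_finf \<nu> ((\<lambda>a. op_abs \<mu> \<nu> T (y a)) ` I) 0"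
proof (rule F.is_finf_zeroI)
  let ?P = "op_abs \<mu> \<nu> T"
  have lin: "linear T" using T FLb_linear by blast
  have Plin: "linear ?P" using oa_lin[OF T] .
  fix a assume "a \<in> I" then show "F.lq 0 (?P (y a))" using oa_nonneg[OF T E.fdec_nonneg[OF y]] by blast
next
  let ?P = "op_abs \<mu> \<nu> T"
  have lin: "linear T" using T FLb_linear by blast
  have Plin: "linear ?P" using oa_lin[OF T] .
  fix l assume l: "\<And>a. a \<in> I \<Longrightarrow> F.lq l (?P (y a))"
  obtain b where b: "b \<in> I" using d unfolding directed_set_def by blast
  have yb: "E.lq 0 (y b)" using E.fdec_nonneg[OF y b] .
  have "F.lq (psi T (y b)) (?P (y b) - l)"
  proof (rule psi_least[OF yb])
    fix u assume u: "E.lq 0 u" "E.lq u (y b)"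
    define v where "v = y b - u"
    have v: "E.lq 0 v" using u E.lq_diff v_def by blast
    have uv: "u + v = y b" unfolding v_def by simp
    define q where "q = (\<lambda>a. E.mt u (y a) - E.mt v (y a))"
    have conv: "forder_converges \<mu> I r q 0"
      unfolding forder_converges_def
    proof (intro exI conjI ballI)
      show "fdecreases_to_zero \<mu> I r (\<lambda>a. 2 *\<^sub>R y a)" by (rule E.fdec_scale[OF y]) simp
      fix a assume a: "a \<in> I"
      have ya: "E.lq 0 (y a)" using E.fdec_nonneg[OF y a] .
      have m1: "E.lq 0 (E.mt u (y a))" "E.lq 0 (E.mt v (y a))" using u v ya E.mt_nonneg by auto
      have "E.lq (fabs \<mu> (q a)) (E.mt u (y a) + E.mt v (y a))" unfolding q_def by (rule E.abs_diff_le[OF m1])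
      moreover have "E.lq (E.mt u (y a) + E.mt v (y a)) (y a + y a)" by (intro E.lq_add_mono) auto
      ultimately show "E.lq (fabs \<mu> (q a - 0)) (2 *\<^sub>R y a)" using E.lq_trans by (simp add: scaleR_2)
    qed
    from pres[OF conv] obtain w where w: "fdecreases_to_zero \<nu> I r w"
      and wd: "\<And>a. a \<in> I \<Longrightarrow> F.lq (fabs \<nu> (T (q a) - 0)) (w a)"
      unfolding forder_converges_def by blast
    have "F.lq (T u - T v - (?P (y b) - l)) 0"
    proof (rule F.fdec_tail[OF d w b])
      fix a assume a: "a \<in> I" and ba: "r b a"
      have ya: "E.lq 0 (y a)" using E.fdec_nonneg[OF y a] .
      have yab: "E.lq (y a) (y b)" using y a b ba unfolding fdecreases_to_zero_def by blast
      let ?u' = "u - E.mt u (y a)" let ?v' = "v - E.mt v (y a)"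
      have u': "E.lq 0 ?u'" using E.lq_diff[of "E.mt u (y a)" u] by simp
      have v': "E.lq 0 ?v'" using E.lq_diff[of "E.mt v (y a)" v] by simp
      have split: "T u - T v = (T ?u' - T ?v') + T (q a)"
        unfolding q_def by (simp add: real_vector.linear_diff[OF lin] algebra_simps)
      have "E.lq (y a) (E.mt u (y a) + E.mt v (y a))"
      proof -
        have "E.mt (u + v) (y a) = y a" using uv E.mt_eq_right[OF yab] by simp
        then show ?thesis using E.riesz_ineq[OF u(1) v ya] by simp
      qed
      then have "E.lq (?u' + ?v') (y b - y a)"
        using E.lq_neg[of "y a"] E.lq_add[of _ _ "u + v"] uv by (fastforce simp: algebra_simps)
      then have "F.lq (?P (?u' + ?v')) (?P (y b - y a))" by (rule oa_mono[OF T])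
      moreover have "F.lq (T ?u' - T ?v') (?P (?u' + ?v'))" by (rule oa_diff[OF T u' v'])
      moreover have "?P (y b - y a) = ?P (y b) - ?P (y a)" by (rule real_vector.linear_diff[OF Plin])
      moreover have "F.lq (?P (y b) - ?P (y a)) (?P (y b) - l)"
        using F.lq_add[OF F.lq_neg[OF l[OF a]], of "?P (y b)"] by (simp add: algebra_simps)
      ultimately have 1: "F.lq (T ?u' - T ?v') (?P (y b) - l)" using F.lq_trans by metis
      have 2: "F.lq (T (q a)) (w a)" using wd[OF a] F.abs_ge F.lq_trans by fastforce
      have "F.lq (T u - T v) ((?P (y b) - l) + w a)" using split F.lq_add_mono[OF 1 2] by simp
      then show "F.lq (T u - T v - (?P (y b) - l)) (w a)" by (rule F.lq_sub_left)
    qed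
    then show "F.lq (T u - T (y b - u)) (?P (y b) - l)" using F.lq_diff2 v_def by auto
  qed
  then have "F.lq (?P (y b)) (?P (y b) - l)" using oa_psi[OF T yb] by simp
  then show "F.lq l 0" using F.lq_swap[of "?P (y b)" "?P (y b)" l] by simp
qed

end

context rsp begin

lemma pos_scale: "0 < c \<Longrightarrow> pos (c *\<^sub>R z) = c *\<^sub>R pos z"
  unfolding pos_def using jn_scale[of c z 0] by simp

lemma key_ineq:
  assumes b: "lq 0 b" and ba: "lq b a" and n: "0 < n" and t: "0 < t"
  shows "lq (mt a (t *\<^sub>R pos (a - n *\<^sub>R b))) (a - b + inverse n *\<^sub>R a)"
proof -
  let ?v = "pos (a - n *\<^sub>R b)"
  let ?d = "a - b + inverse n *\<^sub>R a"
  let ?e = "pos (a - ?d)"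
  have a: "lq 0 a" using b ba lq_trans by blast
  have tv: "lq 0 (t *\<^sub>R ?v)" using lq_scale[OF t, of 0 ?v] by simp
  have d: "lq 0 ?d"
  proof -
    have "lq 0 (a - b)" using ba lq_diff by blast
    moreover have "lq 0 (inverse n *\<^sub>R a)" using lq_scale[of "inverse n" 0 a] n a by simp
    ultimately show ?thesis using lq_sum_nonneg by blast
  qed
  have ade: "lq a (?d + ?e)"
    using pos_ge[of "a - ?d"] lq_add[of "a - ?d" ?e ?d] by (simp add: algebra_simps)
  have "a - ?d = inverse n *\<^sub>R (- (a - n *\<^sub>R b))"
    using n by (simp add: algebra_simps)
  then have e_eq: "?e = inverse n *\<^sub>R neg (a - n *\<^sub>R b)"
    using pos_scale[of "inverse n" "- (a - n *\<^sub>R b)"] n unfolding pos_def neg_def by simp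
  have disj: "mt ?e (t *\<^sub>R ?v) = 0"
    unfolding e_eq
    by (rule disj_scale) (use n t mt_pos_neg[of "a - n *\<^sub>R b"] mt_comm in auto)
  have "lq (mt a (t *\<^sub>R ?v)) (mt (?d + ?e) (t *\<^sub>R ?v))" by (rule mt_mono[OF ade lq_refl])
  also have "lq (mt (?d + ?e) (t *\<^sub>R ?v)) (mt ?d (t *\<^sub>R ?v) + mt ?e (t *\<^sub>R ?v))"
    by (rule riesz_ineq[OF d pos_nonneg tv])
  finally have "lq (mt a (t *\<^sub>R ?v)) (mt ?d (t *\<^sub>R ?v))" using disj by simp
  then show ?thesis using mt_lb1 lq_trans by blast
qed

end

context ops begin

lemma M2:
  assumes T: "T \<in> FLb \<mu> \<nu>" and y: "fdecreases_to_zero \<mu> I r y"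
    and xy: "\<And>a. a \<in> I \<Longrightarrow> E.lq (fabs \<mu> (x a - 0)) (y a)"
    and inf: "is_finf \<nu> ((\<lambda>a. op_abs \<mu> \<nu> T (y a)) ` I) 0"
  shows "forder_converges \<nu> I r (\<lambda>a. T (x a)) 0"
  unfolding forder_converges_def
proof (intro exI conjI ballI)
  show "fdecreases_to_zero \<nu> I r (\<lambda>a. op_abs \<mu> \<nu> T (y a))"
    unfolding fdecreases_to_zero_def
  proof (intro conjI ballI impI inf)
    fix a b assume "a \<in> I" "b \<in> I" "r a b"
    then show "F.lq (op_abs \<mu> \<nu> T (y b)) (op_abs \<mu> \<nu> T (y a))"
      using y oa_mono[OF T] unfolding fdecreases_to_zero_def by blast
  qed
  fix a assume a: "a \<in> I"
  have "F.lq (fabs \<nu> (T (x a))) (op_abs \<mu> \<nu> T (fabs \<mu> (x a)))" by (rule oa_app[OF T])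
  also have "F.lq (op_abs \<mu> \<nu> T (fabs \<mu> (x a))) (op_abs \<mu> \<nu> T (y a))"
    using xy[OF a] oa_mono[OF T] by simp
  finally show "F.lq (fabs \<nu> (T (x a) - 0)) (op_abs \<mu> \<nu> T (y a))" by simp
qed

lemma M4:
  assumes T: "T \<in> FLb \<mu> \<nu>" and S: "S \<in> gen_ideal \<mu> \<nu> T"
    and y: "\<And>a. a \<in> I \<Longrightarrow> E.lq 0 (y a)"
    and inf: "is_finf \<nu> ((\<lambda>a. op_abs \<mu> \<nu> T (y a)) ` I) 0"
  shows "is_finf \<nu> ((\<lambda>a. op_abs \<mu> \<nu> S (y a)) ` I) 0"
proof -
  obtain c where SF: "S \<in> FLb \<mu> \<nu>" and c: "c > 0" "op_le \<mu> \<nu> (op_abs \<mu> \<nu> S) (\<lambda>x. c *\<^sub>R op_abs \<mu> \<nu> T x)"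
    using gen_ideal_bound[OF T S] by blast
  show ?thesis
  proof (rule F.is_finf_zeroI)
    fix a assume "a \<in> I" then show "F.lq 0 (op_abs \<mu> \<nu> S (y a))" using oa_nonneg[OF SF y] by blast
  next
    fix l assume l: "\<And>a. a \<in> I \<Longrightarrow> F.lq l (op_abs \<mu> \<nu> S (y a))"
    have "F.lq (inverse c *\<^sub>R l) 0"
    proof (rule inf_get[OF inf])
      fix a assume a: "a \<in> I"
      have "F.lq l (c *\<^sub>R op_abs \<mu> \<nu> T (y a))" using l[OF a] op_leD[OF c(2) y[OF a]] F.lq_trans by blast
      then show "F.lq (inverse c *\<^sub>R l) (op_abs \<mu> \<nu> T (y a))"
        using F.lq_scale[of "inverse c"] c by fastforce
    qed
    then show "F.lq l 0" using F.lq_scale[OF c(1), of "inverse c *\<^sub>R l" 0] c by simp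
  qed
qed

end

locale cons = ops \<mu> \<nu>
  for \<mu> :: "'a::real_vector \<Rightarrow> 'a \<Rightarrow> real" and \<nu> :: "'b::real_vector \<Rightarrow> 'b \<Rightarrow> real" +
  fixes T :: "'a \<Rightarrow> 'b" and I :: "'i set" and r :: "'i \<Rightarrow> 'i \<Rightarrow> bool" and y :: "'i \<Rightarrow> 'a"
    and \<beta> :: 'i and n :: real
  assumes T: "T \<in> FLb \<mu> \<nu>" and d: "directed_set I r" and y: "fdecreases_to_zero \<mu> I r y"
    and bI: "\<beta> \<in> I" and n: "0 < n"
begin

abbreviation "P \<equiv> op_abs \<mu> \<nu> T"

definition v where "v a = E.pos (y \<beta> - n *\<^sub>R y a)"
definition Gs where "Gs z = (\<lambda>(a, t). P (E.mt z (t *\<^sub>R v a))) ` (I \<times> {0<..})"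
definition G where "G z = F.sp (Gs z)"
definition phi where "phi z = P z - G z"
definition Sop where "Sop = ext phi"

lemma Plin: "linear P" by (rule oa_lin[OF T])

lemma ynn: "a \<in> I \<Longrightarrow> E.lq 0 (y a)" by (rule E.fdec_nonneg[OF y])

lemma v_nonneg: "E.lq 0 (v a)" unfolding v_def by simp

lemma v_mono: assumes "a \<in> I" "c \<in> I" "r a c" shows "E.lq (v a) (v c)"
proof -
  have "E.lq (y c) (y a)" using y assms unfolding fdecreases_to_zero_def by blast
  then have "E.lq (n *\<^sub>R y c) (n *\<^sub>R y a)" by (rule E.lq_scale[OF n])
  then have "E.lq (y \<beta> - n *\<^sub>R y a) (y \<beta> - n *\<^sub>R y c)"
    using E.lq_neg E.lq_add[of _ _ "y \<beta>"] by (fastforce simp: algebra_simps)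
  then show ?thesis unfolding v_def by (rule E.pos_mono)
qed

lemma tv_nonneg: "0 < t \<Longrightarrow> E.lq 0 (t *\<^sub>R v a)"
  using E.lq_scale[of t 0 "v a"] v_nonneg by simp

lemma Gs_ne: "Gs z \<noteq> {}" unfolding Gs_def using bI by auto

lemma Gs_bdd: assumes z: "E.lq 0 z" shows "q \<in> Gs z \<Longrightarrow> F.lq q (P z)"
  unfolding Gs_def using oa_mono[OF T E.mt_lb1] by auto

lemma G_ub: "E.lq 0 z \<Longrightarrow> a \<in> I \<Longrightarrow> 0 < t \<Longrightarrow> F.lq (P (E.mt z (t *\<^sub>R v a))) (G z)"
  unfolding G_def by (rule F.sp_ub[OF _ Gs_bdd]) (auto simp: Gs_def)

lemma G_least: "E.lq 0 z \<Longrightarrow> (\<And>a t. a \<in> I \<Longrightarrow> 0 < t \<Longrightarrow> F.lq (P (E.mt z (t *\<^sub>R v a))) bd) \<Longrightarrow> F.lq (G z) bd"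
  unfolding G_def by (rule F.sp_least[OF Gs_ne]) (auto simp: Gs_def)

lemma G_le_P: "E.lq 0 z \<Longrightarrow> F.lq (G z) (P z)"
  by (rule G_least) (auto intro: oa_mono[OF T])

lemma G_nonneg: assumes z: "E.lq 0 z" shows "F.lq 0 (G z)"
proof -
  have "F.lq 0 (P (E.mt z (1 *\<^sub>R v \<beta>)))" using oa_nonneg[OF T] E.mt_nonneg[OF z] v_nonneg by simp
  also have "F.lq \<dots> (G z)" using G_ub[OF z bI, of 1] by simp
  finally show ?thesis .
qed

lemma G_add: assumes z1: "E.lq 0 z1" and z2: "E.lq 0 z2" shows "G (z1 + z2) = G z1 + G z2"
proof (rule F.lq_antisym)
  have z12: "E.lq 0 (z1 + z2)" using z1 z2 E.lq_sum_nonneg by blast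
  show "F.lq (G (z1 + z2)) (G z1 + G z2)"
  proof (rule G_least[OF z12])
    fix a and t :: real assume a: "a \<in> I" and t: "0 < t"
    have "E.lq (E.mt (z1 + z2) (t *\<^sub>R v a)) (E.mt z1 (t *\<^sub>R v a) + E.mt z2 (t *\<^sub>R v a))"
      by (rule E.riesz_ineq[OF z1 z2 tv_nonneg[OF t]])
    then have "F.lq (P (E.mt (z1 + z2) (t *\<^sub>R v a))) (P (E.mt z1 (t *\<^sub>R v a)) + P (E.mt z2 (t *\<^sub>R v a)))"
      using oa_mono[OF T] real_vector.linear_add[OF Plin] by metis
    also have "F.lq \<dots> (G z1 + G z2)" by (intro F.lq_add_mono G_ub z1 z2 a t)
    finally show "F.lq (P (E.mt (z1 + z2) (t *\<^sub>R v a))) (G z1 + G z2)" .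
  qed
  have "F.lq (G z1) (G (z1 + z2) - G z2)"
  proof (rule G_least[OF z1])
    fix a and t :: real assume a: "a \<in> I" and t: "0 < t"
    have "F.lq (G z2) (G (z1 + z2) - P (E.mt z1 (t *\<^sub>R v a)))"
    proof (rule G_least[OF z2])
      fix a' and t' :: real assume a': "a' \<in> I" and t': "0 < t'"
      obtain c where c: "c \<in> I" "r a c" "r a' c" using d a a' unfolding directed_set_def by blast
      have tt: "0 < t + t'" using t t' by simp
      have "E.lq (E.mt z1 (t *\<^sub>R v a) + E.mt z2 (t' *\<^sub>R v a')) (E.mt (z1 + z2) ((t + t') *\<^sub>R v c))"
      proof (rule E.mt_greatest)
        show "E.lq (E.mt z1 (t *\<^sub>R v a) + E.mt z2 (t' *\<^sub>R v a')) (z1 + z2)"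
          by (intro E.lq_add_mono) auto
        have "E.lq (E.mt z1 (t *\<^sub>R v a)) (t *\<^sub>R v c)"
          using E.mt_lb2 E.lq_scale[OF t v_mono[OF a c(1,2)]] E.lq_trans by blast
        moreover have "E.lq (E.mt z2 (t' *\<^sub>R v a')) (t' *\<^sub>R v c)"
          using E.mt_lb2 E.lq_scale[OF t' v_mono[OF a' c(1,3)]] E.lq_trans by blast
        ultimately show "E.lq (E.mt z1 (t *\<^sub>R v a) + E.mt z2 (t' *\<^sub>R v a')) ((t + t') *\<^sub>R v c)"
          using E.lq_add_mono by (simp add: scaleR_add_left)
      qed
      then have "F.lq (P (E.mt z1 (t *\<^sub>R v a)) + P (E.mt z2 (t' *\<^sub>R v a'))) (P (E.mt (z1 + z2) ((t + t') *\<^sub>R v c)))"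
        using oa_mono[OF T] real_vector.linear_add[OF Plin] by metis
      also have "F.lq \<dots> (G (z1 + z2))" by (rule G_ub[OF z12 c(1) tt])
      finally show "F.lq (P (E.mt z2 (t' *\<^sub>R v a'))) (G (z1 + z2) - P (E.mt z1 (t *\<^sub>R v a)))"
        by (rule F.lq_plus_left)
    qed
    then show "F.lq (P (E.mt z1 (t *\<^sub>R v a))) (G (z1 + z2) - G z2)" by (rule F.lq_swap)
  qed
  from F.lq_minus_right[OF this] show "F.lq (G z1 + G z2) (G (z1 + z2))" by (simp add: add.commute)
qed

lemma G_hom: assumes c: "0 < c" and z: "E.lq 0 z" shows "G (c *\<^sub>R z) = c *\<^sub>R G z"
proof -
  have "Gs (c *\<^sub>R z) = (\<lambda>q. c *\<^sub>R q) ` Gs z"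
  proof -
    have eq: "P (E.mt (c *\<^sub>R z) (t *\<^sub>R v a)) = c *\<^sub>R P (E.mt z ((t / c) *\<^sub>R v a))" for t a
    proof -
      have "E.mt (c *\<^sub>R z) (t *\<^sub>R v a) = E.mt (c *\<^sub>R z) (c *\<^sub>R ((t / c) *\<^sub>R v a))" using c by simp
      also have "\<dots> = c *\<^sub>R E.mt z ((t / c) *\<^sub>R v a)" by (rule E.mt_scale[OF c])
      finally show ?thesis using real_vector.linear_scale[OF Plin] by simp
    qed
    show ?thesis
    proof (intro set_eqI iffI)
      fix q assume "q \<in> Gs (c *\<^sub>R z)"
      then obtain a t where at: "a \<in> I" "0 < t" "q = P (E.mt (c *\<^sub>R z) (t *\<^sub>R v a))" unfolding Gs_def by auto
      then have "q = c *\<^sub>R P (E.mt z ((t / c) *\<^sub>R v a))" using eq by simp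
      moreover have "P (E.mt z ((t / c) *\<^sub>R v a)) \<in> Gs z" unfolding Gs_def using at c
        by (intro image_eqI[of _ _ "(a, t / c)"]) auto
      ultimately show "q \<in> (\<lambda>q. c *\<^sub>R q) ` Gs z" by blast
    next
      fix q assume "q \<in> (\<lambda>q. c *\<^sub>R q) ` Gs z"
      then obtain a t where at: "a \<in> I" "0 < t" "q = c *\<^sub>R P (E.mt z (t *\<^sub>R v a))" unfolding Gs_def by auto
      then have "q = P (E.mt (c *\<^sub>R z) ((c * t) *\<^sub>R v a))" using eq[of "c * t" a] c by simp
      then show "q \<in> Gs (c *\<^sub>R z)" unfolding Gs_def using at c
        by (intro image_eqI[of _ _ "(a, c * t)"]) auto
    qed
  qed
  then show ?thesis unfolding G_def using F.sp_scale[OF c Gs_ne Gs_bdd[OF z]] by simp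
qed

lemma phi_add: "E.lq 0 z1 \<Longrightarrow> E.lq 0 z2 \<Longrightarrow> phi (z1 + z2) = phi z1 + phi z2"
  unfolding phi_def using G_add real_vector.linear_add[OF Plin] by (simp add: algebra_simps)

lemma phi_hom: "0 < c \<Longrightarrow> E.lq 0 z \<Longrightarrow> phi (c *\<^sub>R z) = c *\<^sub>R phi z"
  unfolding phi_def using G_hom real_vector.linear_scale[OF Plin] by (simp add: scaleR_diff_right)

lemma S_lin: "linear Sop" and S_eq: "E.lq 0 z \<Longrightarrow> Sop z = phi z"
  unfolding Sop_def using ext_props[of phi, OF phi_add phi_hom] by auto

lemma S_pos: "fuzzy_positive \<mu> \<nu> Sop"
  unfolding fuzzy_positive_def
proof (intro allI impI)
  fix z assume z: "E.lq 0 z"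
  show "F.lq 0 (Sop z)" using S_eq[OF z] G_le_P[OF z] F.lq_diff[of "G z" "P z"] unfolding phi_def by simp
qed

lemma S_FLb: "Sop \<in> FLb \<mu> \<nu>" by (rule FLb_pos[OF S_lin S_pos])

lemma S_abs: "op_abs \<mu> \<nu> Sop = Sop" by (rule oa_of_pos[OF S_lin S_pos])

lemma S_gen: "Sop \<in> gen_ideal \<mu> \<nu> T"
proof (rule gen_ideal_mem[OF S_FLb])
  show "op_le \<mu> \<nu> (op_abs \<mu> \<nu> Sop) P" unfolding S_abs
  proof (rule op_leI)
    fix z assume z: "E.lq 0 z"
    show "F.lq (Sop z) (P z)" using S_eq[OF z] G_nonneg[OF z] F.lq_sub_le unfolding phi_def by simp
  qed
qed

lemma v_null: "a \<in> I \<Longrightarrow> v a \<in> null_ideal \<mu> \<nu> Sop"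
proof -
  assume a: "a \<in> I"
  have "F.lq (P (E.mt (v a) (1 *\<^sub>R v a))) (G (v a))" by (rule G_ub[OF v_nonneg a]) simp
  then have "F.lq (P (v a)) (G (v a))" by (simp add: E.mt_eq_left)
  then have "F.lq (phi (v a)) 0" unfolding phi_def using F.lq_diff2 by blast
  moreover have "F.lq 0 (phi (v a))" using positiveD[OF S_pos v_nonneg[of a]] S_eq[OF v_nonneg[of a]] by simp
  ultimately have "phi (v a) = 0" using F.lq_antisym by blast
  then show "v a \<in> null_ideal \<mu> \<nu> Sop" unfolding null_ideal_def S_abs
    using E.abs_of_nonneg[OF v_nonneg] S_eq[OF v_nonneg] by simp
qed

lemma v_sup: "is_fsup \<mu> (v ` I) (y \<beta>)"
  unfolding is_sup_on_def is_ub_on_def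
proof (intro conjI allI impI ballI)
  show "y \<beta> \<in> UNIV" by simp
  fix q assume "q \<in> v ` I"
  then obtain a where a: "a \<in> I" "q = v a" by blast
  have "E.lq (y \<beta> - n *\<^sub>R y a) (y \<beta>)"
    using E.lq_sub_le E.lq_scale[OF n ynn[OF a(1)]] by simp
  then show "E.lq q (y \<beta>)" unfolding a v_def E.pos_def using ynn[OF bI] by (intro E.jn_least)
next
  fix u assume "u \<in> UNIV \<and> (\<forall>q\<in>v ` I. E.lq q u)"
  then have u: "\<And>a. a \<in> I \<Longrightarrow> E.lq (v a) u" by blast
  have "E.lq (inverse n *\<^sub>R (y \<beta> - u)) 0"
  proof (rule E.fdec_greatest[OF y])
    fix a assume a: "a \<in> I"
    have "E.lq (y \<beta> - n *\<^sub>R y a) u" using E.lq_trans[OF E.pos_ge u[OF a, unfolded v_def]] .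
    from E.lq_add[OF this, of "n *\<^sub>R y a - u"] have "E.lq (y \<beta> - u) (n *\<^sub>R y a)" by (simp add: algebra_simps)
    from E.lq_scale[OF _ this, of "inverse n"] show "E.lq (inverse n *\<^sub>R (y \<beta> - u)) (y a)" using n by simp
  qed
  then have "E.lq (y \<beta> - u) 0" using E.lq_scale[OF n, of "inverse n *\<^sub>R (y \<beta> - u)" 0] n by simp
  then show "E.lq (y \<beta>) u" using E.lq_diff2[of "y \<beta>" u] by simp
qed

lemma key:
  assumes yb: "y \<beta> \<in> null_ideal \<mu> \<nu> Sop"
    and l: "\<And>a. a \<in> I \<Longrightarrow> F.lq l (P (y a))"
  shows "F.lq (n *\<^sub>R l) (P (y \<beta>))"
proof -
  have y0: "E.lq 0 (y \<beta>)" by (rule ynn[OF bI])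
  have "phi (y \<beta>) = 0" using yb unfolding null_ideal_def S_abs using E.abs_of_nonneg[OF y0] S_eq[OF y0] by simp
  then have GP: "G (y \<beta>) = P (y \<beta>)" unfolding phi_def by simp
  have "F.lq (G (y \<beta>)) (P (y \<beta>) - l + inverse n *\<^sub>R P (y \<beta>))"
  proof (rule G_least[OF y0])
    fix a and t :: real assume a: "a \<in> I" and t: "0 < t"
    obtain c where c: "c \<in> I" "r a c" "r \<beta> c" using d a bI unfolding directed_set_def by blast
    have ycb: "E.lq (y c) (y \<beta>)" using y c bI unfolding fdecreases_to_zero_def by blast
    have "E.lq (E.mt (y \<beta>) (t *\<^sub>R v a)) (E.mt (y \<beta>) (t *\<^sub>R v c))"
      by (rule E.mt_mono[OF E.lq_refl E.lq_scale[OF t v_mono[OF a c(1,2)]]])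
    also have "E.lq \<dots> (y \<beta> - y c + inverse n *\<^sub>R y \<beta>)"
      unfolding v_def by (rule E.key_ineq[OF ynn[OF c(1)] ycb n t])
    finally have "F.lq (P (E.mt (y \<beta>) (t *\<^sub>R v a))) (P (y \<beta> - y c + inverse n *\<^sub>R y \<beta>))"
      by (rule oa_mono[OF T])
    also have "P (y \<beta> - y c + inverse n *\<^sub>R y \<beta>) = P (y \<beta>) - P (y c) + inverse n *\<^sub>R P (y \<beta>)"
      by (simp add: real_vector.linear_add[OF Plin] real_vector.linear_diff[OF Plin] real_vector.linear_scale[OF Plin])
    also have "F.lq \<dots> (P (y \<beta>) - l + inverse n *\<^sub>R P (y \<beta>))"
    proof -
      have "F.lq (- P (y c)) (- l)" by (rule F.lq_neg[OF l[OF c(1)]])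
      from F.lq_add[OF this, of "P (y \<beta>) + inverse n *\<^sub>R P (y \<beta>)"] show ?thesis by (simp add: algebra_simps)
    qed
    finally show "F.lq (P (E.mt (y \<beta>) (t *\<^sub>R v a))) (P (y \<beta>) - l + inverse n *\<^sub>R P (y \<beta>))" .
  qed
  then have "F.lq (P (y \<beta>)) (P (y \<beta>) - l + inverse n *\<^sub>R P (y \<beta>))" using GP by simp
  from F.lq_add[OF this, of "l - P (y \<beta>)"] have "F.lq l (inverse n *\<^sub>R P (y \<beta>))"
    by (simp add: algebra_simps)
  then have "F.lq (n *\<^sub>R l) (n *\<^sub>R (inverse n *\<^sub>R P (y \<beta>)))" by (rule F.lq_scale[OF n])
  then show ?thesis using n by simp
qed

end

context ops begin

lemma M6:
  assumes T: "T \<in> FLb \<mu> \<nu>" and d: "directed_set I r" and y: "fdecreases_to_zero \<mu> I r y"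
    and H: "\<And>S b n. S \<in> gen_ideal \<mu> \<nu> T \<Longrightarrow> b \<in> I \<Longrightarrow> 0 < n \<Longrightarrow>
       (\<forall>a\<in>I. E.pos (y b - n *\<^sub>R y a) \<in> null_ideal \<mu> \<nu> S) \<Longrightarrow>
       is_fsup \<mu> ((\<lambda>a. E.pos (y b - n *\<^sub>R y a)) ` I) (y b) \<Longrightarrow>
       (\<forall>a\<in>I. \<forall>c\<in>I. r a c \<longrightarrow> E.lq (E.pos (y b - n *\<^sub>R y a)) (E.pos (y b - n *\<^sub>R y c))) \<Longrightarrow>
       y b \<in> null_ideal \<mu> \<nu> S"
  shows "is_finf \<nu> ((\<lambda>a. op_abs \<mu> \<nu> T (y a)) ` I) 0"
proof (rule F.is_finf_zeroI)
  fix a assume "a \<in> I" then show "F.lq 0 (op_abs \<mu> \<nu> T (y a))" using oa_nonneg[OF T E.fdec_nonneg[OF y]] by blast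
next
  fix l assume l: "\<And>a. a \<in> I \<Longrightarrow> F.lq l (op_abs \<mu> \<nu> T (y a))"
  obtain b where b: "b \<in> I" using d unfolding directed_set_def by blast
  show "F.lq l 0"
  proof (rule F.archimedean)
    fix m :: nat assume m: "m \<ge> 1"
    then have mpos: "0 < real m" by simp
    interpret C: cons \<mu> \<nu> T I r y b "real m"
      by (unfold_locales) (use T d y b mpos in auto)
    have "y b \<in> null_ideal \<mu> \<nu> C.Sop"
    proof (rule H[OF C.S_gen b mpos])
      show "\<forall>a\<in>I. E.pos (y b - real m *\<^sub>R y a) \<in> null_ideal \<mu> \<nu> C.Sop" using C.v_null unfolding C.v_def by blast
      show "is_fsup \<mu> ((\<lambda>a. E.pos (y b - real m *\<^sub>R y a)) ` I) (y b)" using C.v_sup unfolding C.v_def .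
      show "\<forall>a\<in>I. \<forall>c\<in>I. r a c \<longrightarrow> E.lq (E.pos (y b - real m *\<^sub>R y a)) (E.pos (y b - real m *\<^sub>R y c))"
        using C.v_mono unfolding C.v_def by blast
    qed
    then show "F.lq (real m *\<^sub>R l) (op_abs \<mu> \<nu> T (y b))" by (rule C.key[OF _ l])
  qed
qed

lemma null_zero: assumes S: "S \<in> FLb \<mu> \<nu>" and z: "E.lq 0 z" and zN: "z \<in> null_ideal \<mu> \<nu> S"
  shows "op_abs \<mu> \<nu> S z = 0"
  using zN E.abs_of_nonneg[OF z] unfolding null_ideal_def by simp

lemma null_of: assumes z: "E.lq 0 z" and h: "op_abs \<mu> \<nu> S z = 0"
  shows "z \<in> null_ideal \<mu> \<nu> S"
  using h E.abs_of_nonneg[OF z] unfolding null_ideal_def by simp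

lemma sigma_closure:
  assumes T: "T \<in> FLb \<mu> \<nu>" and S: "S \<in> gen_ideal \<mu> \<nu> T"
    and pres: "\<And>x. forder_converges \<mu> (UNIV::nat set) (\<le>) x 0 \<Longrightarrow> forder_converges \<nu> UNIV (\<le>) (\<lambda>a. T (x a)) 0"
    and x: "\<And>k. E.lq 0 (x k) \<and> x k \<in> null_ideal \<mu> \<nu> S" and inc: "fincreases_to \<mu> x s"
  shows "s \<in> null_ideal \<mu> \<nu> S"
proof -
  have SF: "S \<in> FLb \<mu> \<nu>" using gen_ideal_bound[OF T S] by blast
  have mono: "\<And>i j. i \<le> j \<Longrightarrow> E.lq (x i) (x j)" and sup: "is_fsup \<mu> (range x) s"
    using inc unfolding fincreases_to_def by auto
  have xs: "E.lq (x k) s" for k using sup unfolding is_sup_on_def is_ub_on_def by auto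
  have s0: "E.lq 0 s" using x[of 0] xs[of 0] E.lq_trans by blast
  have d: "directed_set (UNIV::nat set) (\<le>)" unfolding directed_set_def by (auto, metis le_cases order_refl)
  define z where "z k = s - x k" for k
  have zdec: "fdecreases_to_zero \<mu> UNIV (\<le>) z"
    unfolding fdecreases_to_zero_def
  proof (intro conjI ballI impI E.is_finf_zeroI)
    fix i j :: nat assume "i \<le> j"
    then show "E.lq (z j) (z i)" unfolding z_def using E.lq_neg[OF mono] E.lq_add[of _ _ s] by (fastforce simp: algebra_simps)
  next
    fix i show "E.lq 0 (z i)" unfolding z_def using E.lq_diff xs by blast
  next
    fix l assume l: "\<And>i. i \<in> UNIV \<Longrightarrow> E.lq l (z i)"
    have "E.lq (x i) (s - l)" for i using E.lq_swap[of l s "x i"] l unfolding z_def by blast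
    then have "E.lq s (s - l)" using sup unfolding is_sup_on_def is_ub_on_def by auto
    then show "E.lq l 0" using E.lq_swap[of s s l] by simp
  qed
  have conv: "forder_converges \<mu> UNIV (\<le>) z 0"
    unfolding forder_converges_def
    by (intro exI[of _ z] conjI zdec ballI) (simp add: E.abs_of_nonneg E.fdec_nonneg[OF zdec])
  have infT: "is_finf \<nu> ((\<lambda>a. op_abs \<mu> \<nu> T (z a)) ` UNIV) 0" by (rule M1[OF T d pres zdec])
  have inf: "is_finf \<nu> ((\<lambda>a. op_abs \<mu> \<nu> S (z a)) ` UNIV) 0"
    by (rule M4[OF T S _ infT]) (rule E.fdec_nonneg[OF zdec])
  have "F.lq (op_abs \<mu> \<nu> S s) 0"
  proof (rule inf_get[OF inf])
    fix k :: nat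
    have "op_abs \<mu> \<nu> S (z k) = op_abs \<mu> \<nu> S s - op_abs \<mu> \<nu> S (x k)"
      unfolding z_def by (rule real_vector.linear_diff[OF oa_lin[OF SF]])
    also have "op_abs \<mu> \<nu> S (x k) = 0" using null_zero[OF SF] x by blast
    finally show "F.lq (op_abs \<mu> \<nu> S s) (op_abs \<mu> \<nu> S (z k))" by simp
  qed
  then have "op_abs \<mu> \<nu> S s = 0" using oa_nonneg[OF SF s0] F.lq_antisym by blast
  then show ?thesis by (rule null_of[OF s0])
qed

end

context ops begin

lemma band_closure:
  fixes f :: "'a set \<Rightarrow> 'i"
  assumes T: "T \<in> FLb \<mu> \<nu>" and S: "S \<in> gen_ideal \<mu> \<nu> T" and f: "inj f"
    and oc: "\<And>(I::'i set) r x. directed_set I r \<Longrightarrow> forder_converges \<mu> I r x 0 \<Longrightarrow> forder_converges \<nu> I r (\<lambda>a. T (x a)) 0"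
    and B: "B \<subseteq> null_ideal \<mu> \<nu> S" and sB: "is_fsup \<mu> B s"
  shows "s \<in> null_ideal \<mu> \<nu> S"
proof -
  let ?N = "null_ideal \<mu> \<nu> S"
  have SF: "S \<in> FLb \<mu> \<nu>" using gen_ideal_bound[OF T S] by blast
  have Nid: "fuzzy_ideal \<mu> ?N" by (rule null_ideal_ideal[OF SF])
  have sub: "subspace ?N" and solid: "\<And>x y. E.lq (fabs \<mu> x) (fabs \<mu> y) \<Longrightarrow> y \<in> ?N \<Longrightarrow> x \<in> ?N"
    using Nid unfolding fuzzy_ideal_def by blast+
  have ub: "\<And>b. b \<in> B \<Longrightarrow> E.lq b s" and least: "\<And>u. (\<And>b. b \<in> B \<Longrightarrow> E.lq b u) \<Longrightarrow> E.lq s u"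
    using sB unfolding is_sup_on_def is_ub_on_def by auto
  show ?thesis
  proof (cases "B = {}")
    case True
    have "E.lq s 0" using least True by blast
    moreover have "E.lq s (s + s)" using least True by blast
    then have "E.lq 0 s" using E.lq_add_iff[of 0 s s] by simp
    ultimately have "s = 0" using E.lq_antisym by blast
    then show ?thesis using real_vector.subspace_0[OF sub] by simp
  next
    case False
    then obtain b0 where b0: "b0 \<in> B" by blast
    have negs: "E.neg s \<in> ?N"
    proof (rule solid)
      have "E.lq (E.neg s) (E.neg b0)" by (rule E.neg_antimono[OF ub[OF b0]])
      also have "E.lq (E.neg b0) (fabs \<mu> b0)" unfolding E.abs_eq
        using E.lq_le_add[OF E.pos_nonneg[of b0], of "E.neg b0"] by (simp add: add.commute)
      finally show "E.lq (fabs \<mu> (E.neg s)) (fabs \<mu> b0)" by (simp add: E.abs_of_nonneg)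
      show "b0 \<in> ?N" using B b0 by blast
    qed
    define C where "C = {z \<in> ?N. E.lq 0 z \<and> E.lq z (E.pos s)}"
    have posb: "E.pos b \<in> C" if b: "b \<in> B" for b
    proof -
      have "E.pos b \<in> ?N"
      proof (rule solid)
        have "fabs \<mu> (E.pos b) = E.pos b" by (rule E.abs_of_nonneg[OF E.pos_nonneg])
        moreover have "fabs \<mu> b = E.pos b + E.neg b" by (rule E.abs_eq)
        ultimately show "E.lq (fabs \<mu> (E.pos b)) (fabs \<mu> b)" using E.lq_le_add[OF E.neg_nonneg] by simp
        show "b \<in> ?N" using B b by blast
      qed
      then show ?thesis unfolding C_def using E.pos_mono[OF ub[OF b]] by simp
    qed
    have C0: "0 \<in> C" unfolding C_def using real_vector.subspace_0[OF sub] by simp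
    have Cjn: "E.jn z1 z2 \<in> C" if "z1 \<in> C" "z2 \<in> C" for z1 z2
    proof -
      have z: "E.lq 0 z1" "E.lq 0 z2" "z1 \<in> ?N" "z2 \<in> ?N" "E.lq z1 (E.pos s)" "E.lq z2 (E.pos s)"
        using that unfolding C_def by auto
      have j0: "E.lq 0 (E.jn z1 z2)" using E.lq_trans[OF z(1) E.jn_ub1] .
      have "E.lq (E.jn z1 z2) (z1 + z2)"
        using E.lq_le_add[OF z(2), of z1] E.lq_le_add[OF z(1), of z2] by (intro E.jn_least) (simp_all add: add.commute)
      moreover have "fabs \<mu> (E.jn z1 z2) = E.jn z1 z2" by (rule E.abs_of_nonneg[OF j0])
      moreover have "fabs \<mu> (z1 + z2) = z1 + z2" by (rule E.abs_of_nonneg[OF E.lq_sum_nonneg[OF z(1) z(2)]])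
      ultimately have "E.lq (fabs \<mu> (E.jn z1 z2)) (fabs \<mu> (z1 + z2))" by simp
      moreover have "z1 + z2 \<in> ?N" by (rule real_vector.subspace_add[OF sub z(3) z(4)])
      ultimately have "E.jn z1 z2 \<in> ?N" by (rule solid)
      then show ?thesis unfolding C_def using j0 E.jn_least[OF z(5) z(6)] by blast
    qed
    define g where "g z = f {z}" for z
    have ginj: "inj_on g C" unfolding g_def using f by (auto simp: inj_on_def dest: injD)
    define I where "I = g ` C"
    define h where "h = inv_into C g"
    have hC: "i \<in> I \<Longrightarrow> h i \<in> C" for i unfolding I_def h_def by (rule inv_into_into)
    have hg: "z \<in> C \<Longrightarrow> h (g z) = z" for z unfolding h_def by (rule inv_into_f_f[OF ginj])
    define r where "r i j = E.lq (h i) (h j)" for i j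
    have d: "directed_set I r" unfolding directed_set_def
    proof (intro conjI ballI impI)
      show "I \<noteq> {}" unfolding I_def using C0 by blast
      fix a assume "a \<in> I" then show "r a a" unfolding r_def by simp
    next
      fix a b c assume "a \<in> I" "b \<in> I" "c \<in> I" "r a b \<and> r b c"
      then show "r a c" unfolding r_def using E.lq_trans[of "h a" "h b" "h c"] by blast
    next
      fix a b assume ab: "a \<in> I" "b \<in> I"
      let ?c = "g (E.jn (h a) (h b))"
      have "E.jn (h a) (h b) \<in> C" using Cjn hC ab by blast
      then have "?c \<in> I" "h ?c = E.jn (h a) (h b)" unfolding I_def using hg by auto
      then show "\<exists>c\<in>I. r a c \<and> r b c" unfolding r_def by (intro bexI[of _ ?c]) auto
    qed
    define x where "x i = E.pos s - h i" for i
    have hle: "i \<in> I \<Longrightarrow> E.lq 0 (h i) \<and> E.lq (h i) (E.pos s) \<and> h i \<in> ?N" for i using hC unfolding C_def by blast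
    have xdec: "fdecreases_to_zero \<mu> I r x"
      unfolding fdecreases_to_zero_def
    proof (intro conjI ballI impI E.is_finf_zeroI)
      fix i j assume "i \<in> I" "j \<in> I" and rij: "r i j"
      have "E.lq (- h j) (- h i)" using rij unfolding r_def by (rule E.lq_neg)
      from E.lq_add[OF this, of "E.pos s"] show "E.lq (x j) (x i)" unfolding x_def by (simp add: algebra_simps)
    next
      fix i assume "i \<in> I" then show "E.lq 0 (x i)" unfolding x_def using hle E.lq_diff[of "h i" "E.pos s"] by blast
    next
      fix l assume l: "\<And>i. i \<in> I \<Longrightarrow> E.lq l (x i)"
      have lz: "E.lq z (E.pos s - l)" if "z \<in> C" for z
      proof -
        have "g z \<in> I" unfolding I_def using that by blast
        from l[OF this] have "E.lq l (E.pos s - z)" unfolding x_def using hg[OF that] by simp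
        then show ?thesis by (rule E.lq_swap)
      qed
      have "E.lq s (E.pos s - l)"
      proof (rule least)
        fix b assume b: "b \<in> B"
        show "E.lq b (E.pos s - l)" using E.lq_trans[OF E.pos_ge lz[OF posb[OF b]]] .
      qed
      moreover have "E.lq 0 (E.pos s - l)" using lz[OF C0] .
      ultimately have "E.lq (E.pos s) (E.pos s - l)" unfolding E.pos_def by (rule E.jn_least)
      then show "E.lq l 0" using E.lq_swap[of "E.pos s" "E.pos s" l] by simp
    qed
    have infT: "is_finf \<nu> ((\<lambda>a. op_abs \<mu> \<nu> T (x a)) ` I) 0"
      by (rule M1[OF T d _ xdec]) (rule oc[OF d])
    have inf: "is_finf \<nu> ((\<lambda>a. op_abs \<mu> \<nu> S (x a)) ` I) 0"
      by (rule M4[OF T S _ infT]) (rule E.fdec_nonneg[OF xdec])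
    have "F.lq (op_abs \<mu> \<nu> S (E.pos s)) 0"
    proof (rule inf_get[OF inf])
      fix i assume i: "i \<in> I"
      have "op_abs \<mu> \<nu> S (x i) = op_abs \<mu> \<nu> S (E.pos s) - op_abs \<mu> \<nu> S (h i)"
        unfolding x_def by (rule real_vector.linear_diff[OF oa_lin[OF SF]])
      also have "op_abs \<mu> \<nu> S (h i) = 0" using null_zero[OF SF] hle[OF i] by blast
      finally show "F.lq (op_abs \<mu> \<nu> S (E.pos s)) (op_abs \<mu> \<nu> S (x i))" by simp
    qed
    then have "op_abs \<mu> \<nu> S (E.pos s) = 0" using oa_nonneg[OF SF E.pos_nonneg] F.lq_antisym by blast
    then have poss: "E.pos s \<in> ?N" by (rule null_of[OF E.pos_nonneg])
    have "E.pos s - E.neg s \<in> ?N" by (rule real_vector.subspace_diff[OF sub poss negs])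
    then show ?thesis by (simp add: E.pos_minus_neg)
  qed
qed

end

lemma nat_directed: "directed_set (UNIV::nat set) (\<le>)"
  unfolding directed_set_def by (auto, metis le_cases order_refl)

theorem theorem4p7:
  fixes \<mu> :: "'a::real_vector \<Rightarrow> 'a \<Rightarrow> real"
    and \<nu> :: "'b::real_vector \<Rightarrow> 'b \<Rightarrow> real"
    and T :: "'a \<Rightarrow> 'b"
  assumes "fuzzy_riesz \<mu>" and "fuzzy_riesz \<nu>" and "fuzzy_dedekind_complete \<nu>"
    and "T \<in> FLb \<mu> \<nu>"
    and "\<exists>f :: 'a set \<Rightarrow> 'i. inj f"
  shows "(fuzzy_order_continuous TYPE('i) \<mu> \<nu> T \<longleftrightarrow>
           (\<forall>S \<in> gen_ideal \<mu> \<nu> T. fuzzy_band \<mu> (null_ideal \<mu> \<nu> S))) \<and>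
         (fuzzy_sigma_order_continuous \<mu> \<nu> T \<longleftrightarrow>
           (\<forall>S \<in> gen_ideal \<mu> \<nu> T. fuzzy_sigma_ideal \<mu> (null_ideal \<mu> \<nu> S)))"
proof -
  interpret O: ops \<mu> \<nu>
    by (unfold_locales) (use assms(1-3) in auto)
  have T: "T \<in> FLb \<mu> \<nu>" by fact
  obtain f :: "'a set \<Rightarrow> 'i" where f: "inj f" using assms(5) by blast
  have P1: "fuzzy_order_continuous TYPE('i) \<mu> \<nu> T \<longleftrightarrow>
           (\<forall>S \<in> gen_ideal \<mu> \<nu> T. fuzzy_band \<mu> (null_ideal \<mu> \<nu> S))"
  proof
    assume oc: "fuzzy_order_continuous TYPE('i) \<mu> \<nu> T"
    have oc': "\<And>(I::'i set) r x. directed_set I r \<Longrightarrow> forder_converges \<mu> I r x 0 \<Longrightarrow> forder_converges \<nu> I r (\<lambda>a. T (x a)) 0"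
      using oc unfolding fuzzy_order_continuous_def by blast
    show "\<forall>S \<in> gen_ideal \<mu> \<nu> T. fuzzy_band \<mu> (null_ideal \<mu> \<nu> S)"
    proof
      fix S assume S: "S \<in> gen_ideal \<mu> \<nu> T"
      have SF: "S \<in> FLb \<mu> \<nu>" using O.gen_ideal_bound[OF T S] by (rule conjunct1)
      show "fuzzy_band \<mu> (null_ideal \<mu> \<nu> S)" unfolding fuzzy_band_def
      proof (intro conjI allI impI)
        show "fuzzy_ideal \<mu> (null_ideal \<mu> \<nu> S)" by (rule O.null_ideal_ideal[OF SF])
        fix B s assume "B \<subseteq> null_ideal \<mu> \<nu> S \<and> is_fsup \<mu> B s"
        then show "s \<in> null_ideal \<mu> \<nu> S" by (elim conjE) (rule O.band_closure[OF T S f oc'])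
      qed
    qed
  next
    assume H: "\<forall>S \<in> gen_ideal \<mu> \<nu> T. fuzzy_band \<mu> (null_ideal \<mu> \<nu> S)"
    show "fuzzy_order_continuous TYPE('i) \<mu> \<nu> T" unfolding fuzzy_order_continuous_def
    proof (intro allI impI)
      fix I :: "'i set" and r x assume h: "directed_set I r \<and> forder_converges \<mu> I r x 0"
      then obtain y where y: "fdecreases_to_zero \<mu> I r y" and xy: "\<And>a. a \<in> I \<Longrightarrow> O.E.lq (fabs \<mu> (x a - 0)) (y a)"
        unfolding forder_converges_def by blast
      have infI: "is_finf \<nu> ((\<lambda>a. op_abs \<mu> \<nu> T (y a)) ` I) 0"
      proof (rule O.M6[OF T _ y])
        show "directed_set I r" using h by blast
        fix S b n
        assume S: "S \<in> gen_ideal \<mu> \<nu> T"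
          and vN: "\<forall>a\<in>I. O.E.pos (y b - n *\<^sub>R y a) \<in> null_ideal \<mu> \<nu> S"
          and vs: "is_fsup \<mu> ((\<lambda>a. O.E.pos (y b - n *\<^sub>R y a)) ` I) (y b)"
        have "fuzzy_band \<mu> (null_ideal \<mu> \<nu> S)" using bspec[OF H S] .
        then have "\<forall>B s. B \<subseteq> null_ideal \<mu> \<nu> S \<and> is_fsup \<mu> B s \<longrightarrow> s \<in> null_ideal \<mu> \<nu> S"
          unfolding fuzzy_band_def by (rule conjunct2)
        then have imp: "(\<lambda>a. O.E.pos (y b - n *\<^sub>R y a)) ` I \<subseteq> null_ideal \<mu> \<nu> S \<and> is_fsup \<mu> ((\<lambda>a. O.E.pos (y b - n *\<^sub>R y a)) ` I) (y b) \<longrightarrow> y b \<in> null_ideal \<mu> \<nu> S"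
          by (elim allE)
        have "(\<lambda>a. O.E.pos (y b - n *\<^sub>R y a)) ` I \<subseteq> null_ideal \<mu> \<nu> S" using vN by auto
        then show "y b \<in> null_ideal \<mu> \<nu> S" using imp vs by simp
      qed
      show "forder_converges \<nu> I r (\<lambda>a. T (x a)) 0" by (rule O.M2[OF T y _ infI]) (fact xy)
    qed
  qed
  have P2: "fuzzy_sigma_order_continuous \<mu> \<nu> T \<longleftrightarrow>
           (\<forall>S \<in> gen_ideal \<mu> \<nu> T. fuzzy_sigma_ideal \<mu> (null_ideal \<mu> \<nu> S))"
  proof
    assume oc: "fuzzy_sigma_order_continuous \<mu> \<nu> T"
    have oc': "\<And>x. forder_converges \<mu> (UNIV::nat set) (\<le>) x 0 \<Longrightarrow> forder_converges \<nu> UNIV (\<le>) (\<lambda>a. T (x a)) 0"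
      using oc unfolding fuzzy_sigma_order_continuous_def by blast
    show "\<forall>S \<in> gen_ideal \<mu> \<nu> T. fuzzy_sigma_ideal \<mu> (null_ideal \<mu> \<nu> S)"
    proof
      fix S assume S: "S \<in> gen_ideal \<mu> \<nu> T"
      have SF: "S \<in> FLb \<mu> \<nu>" using O.gen_ideal_bound[OF T S] by (rule conjunct1)
      show "fuzzy_sigma_ideal \<mu> (null_ideal \<mu> \<nu> S)" unfolding fuzzy_sigma_ideal_def
      proof (intro conjI allI impI)
        show "fuzzy_ideal \<mu> (null_ideal \<mu> \<nu> S)" by (rule O.null_ideal_ideal[OF SF])
        fix x s assume h: "(\<forall>n. fle \<mu> 0 (x n) \<and> x n \<in> null_ideal \<mu> \<nu> S) \<and> fincreases_to \<mu> x s"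
        show "s \<in> null_ideal \<mu> \<nu> S"
        proof (rule O.sigma_closure[OF T S oc'])
          fix k show "O.E.lq 0 (x k) \<and> x k \<in> null_ideal \<mu> \<nu> S" using h by simp
          show "fincreases_to \<mu> x s" using h by simp
        qed
      qed
    qed
  next
    assume H: "\<forall>S \<in> gen_ideal \<mu> \<nu> T. fuzzy_sigma_ideal \<mu> (null_ideal \<mu> \<nu> S)"
    show "fuzzy_sigma_order_continuous \<mu> \<nu> T" unfolding fuzzy_sigma_order_continuous_def
    proof (intro allI impI)
      fix x :: "nat \<Rightarrow> 'a" assume h: "forder_converges \<mu> UNIV (\<le>) x 0"
      then obtain y where y: "fdecreases_to_zero \<mu> UNIV (\<le>) y" and xy: "\<And>a. a \<in> UNIV \<Longrightarrow> O.E.lq (fabs \<mu> (x a - 0)) (y a)"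
        unfolding forder_converges_def by blast
      have infI: "is_finf \<nu> ((\<lambda>a. op_abs \<mu> \<nu> T (y a)) ` UNIV) 0"
      proof (rule O.M6[OF T nat_directed y])
        fix S b and n :: real
        assume S: "S \<in> gen_ideal \<mu> \<nu> T"
          and vN: "\<forall>a\<in>UNIV. O.E.pos (y b - n *\<^sub>R y a) \<in> null_ideal \<mu> \<nu> S"
          and vs: "is_fsup \<mu> ((\<lambda>a. O.E.pos (y b - n *\<^sub>R y a)) ` UNIV) (y b)"
          and vm: "\<forall>a\<in>UNIV. \<forall>c\<in>UNIV. a \<le> c \<longrightarrow> O.E.lq (O.E.pos (y b - n *\<^sub>R y a)) (O.E.pos (y b - n *\<^sub>R y c))"
        have "fuzzy_sigma_ideal \<mu> (null_ideal \<mu> \<nu> S)" using bspec[OF H S] .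
        then have all: "\<forall>x s. (\<forall>k. fle \<mu> 0 (x k) \<and> x k \<in> null_ideal \<mu> \<nu> S) \<and> fincreases_to \<mu> x s \<longrightarrow> s \<in> null_ideal \<mu> \<nu> S"
          unfolding fuzzy_sigma_ideal_def by (rule conjunct2)
        have fi: "fincreases_to \<mu> (\<lambda>a. O.E.pos (y b - n *\<^sub>R y a)) (y b)"
          unfolding fincreases_to_def using vm vs by simp
        have nn: "\<forall>k. O.E.lq 0 (O.E.pos (y b - n *\<^sub>R y k)) \<and> O.E.pos (y b - n *\<^sub>R y k) \<in> null_ideal \<mu> \<nu> S"
          using vN by simp
        show "y b \<in> null_ideal \<mu> \<nu> S"
          using all[rule_format, of "\<lambda>a. O.E.pos (y b - n *\<^sub>R y a)" "y b"] fi nn by blast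
      qed
      show "forder_converges \<nu> UNIV (\<le>) (\<lambda>a. T (x a)) 0" by (rule O.M2[OF T y _ infI]) (fact xy)
    qed
  qed
  show ?thesis using P1 P2 by blast
qed

end
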